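(* Let $\mathcal G=\bigl(\ast_{i\in I}\mathbb Z\bigr)\ast\bigl(\ast_{j\in J}\mathbb Z/2\mathbb Z\bigr)=\langle x_i,y_j\mid y_j^2\rangle$ with generating system $X=\{x_i\}_{i\in I}\sqcup\{y_j\}_{j\in J}$, let $\mathcal H\le\mathcal G$ and $\Gamma=\mathrm{Sch}(\mathcal G,\mathcal H,X)$. Then $\Gamma$ is vertex-transitive (by graph automorphisms, not necessarily label-preserving) if and only if $\mathcal H$ is length-transitive.
   Context: Graphs have vertex set $V$, edge set $E$, initial-vertex map $\iota$ and an involution $e\mapsto\bar e$ (inverse edge); loops, multiple edges and edges with $\bar e=e$ are allowed. The Schreier graph $\mathrm{Sch}(\mathcal A,\mathcal H,X)$ of a subgroup $\mathcal H$ of a group $\mathcal A$ with generating system $X$ has vertices the right cosets $\mathcal Hg$ and, for each coset $\mathcal Hg$ and each $x$ with $x\in X$ or $x^{-1}\in X$, an edge labeled $x$ from $\mathcal Hg$ to $\mathcal Hgx$ whose inverse is the edge labeled $x^{-1}$ from $\mathcal Hgx$. The length $|g|_X$ is the minimal number of factors from $X\cup X^{-1}$ needed to write $g$. A subgroup $\mathcal H\le\mathcal G$ is length-transitive if for every $g\in\mathcal G$ there is a group isomorphism $\alpha_g:\mathcal H\to g^{-1}\mathcal Hg$ with $|\alpha_g(h)|_X=|h|_X$ for all $h\in\mathcal H$. *)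

theory Defs
  imports "HOL-Algebra.Algebra"
begin

text \<open>Letters: Xg i True is x_i, Xg i False is x_i^{-1}, Yg j is y_j (= y_j^{-1}).
  These are exactly the elements of X \<union> X^{-1}.\<close>
datatype ('i,'j) gen = Xg 'i bool | Yg 'j

fun ginv :: "('i,'j) gen \<Rightarrow> ('i,'j) gen" where
  "ginv (Xg i b) = Xg i (\<not> b)"
| "ginv (Yg j) = Yg j"

definition gens :: "'i set \<Rightarrow> 'j set \<Rightarrow> ('i,'j) gen set" where
  "gens I J = {a. case a of Xg i _ \<Rightarrow> i \<in> I | Yg j \<Rightarrow> j \<in> J}"

fun reduced :: "('i,'j) gen list \<Rightarrow> bool" where
  "reduced [] = True"
| "reduced [a] = True"
| "reduced (a # b # w) = (b \<noteq> ginv a \<and> reduced (b # w))"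

definition reduce :: "('i,'j) gen list \<Rightarrow> ('i,'j) gen list" where
  "reduce w = foldr (\<lambda>a acc. case acc of [] \<Rightarrow> [a]
                       | b # r \<Rightarrow> (if b = ginv a then r else a # b # r)) w []"

definition FP :: "'i set \<Rightarrow> 'j set \<Rightarrow> ('i,'j) gen list monoid" where
  "FP I J = \<lparr> carrier = {w. set w \<subseteq> gens I J \<and> reduced w},
             monoid.mult = (\<lambda>u v. reduce (u @ v)), monoid.one = [] \<rparr>"

definition word_length :: "'i set \<Rightarrow> 'j set \<Rightarrow> ('i,'j) gen list \<Rightarrow> nat" where
  "word_length I J g = (LEAST n. \<exists>w. length w = n \<and> set w \<subseteq> gens I J \<and>
      foldr (\<lambda>a acc. [a] \<otimes>\<^bsub>FP I J\<^esub> acc) w \<one>\<^bsub>FP I J\<^esub> = g)"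

definition length_transitive :: "'i set \<Rightarrow> 'j set \<Rightarrow> ('i,'j) gen list set \<Rightarrow> bool" where
  "length_transitive I J H \<longleftrightarrow>
     (\<forall>g \<in> carrier (FP I J). \<exists>\<alpha>.
        \<alpha> \<in> iso ((FP I J)\<lparr>carrier := H\<rparr>)
              ((FP I J)\<lparr>carrier := (\<lambda>h. inv\<^bsub>FP I J\<^esub> g \<otimes>\<^bsub>FP I J\<^esub> h \<otimes>\<^bsub>FP I J\<^esub> g) ` H\<rparr>)
        \<and> (\<forall>h \<in> H. word_length I J (\<alpha> h) = word_length I J h))"

record ('v,'e) sgraph =
  verts :: "'v set"
  edges :: "'e set"
  init :: "'e \<Rightarrow> 'v"
  einv :: "'e \<Rightarrow> 'e"

definition graph_aut :: "('v,'e) sgraph \<Rightarrow> ('v \<Rightarrow> 'v) \<Rightarrow> ('e \<Rightarrow> 'e) \<Rightarrow> bool" where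
  "graph_aut \<Gamma> fv fe \<longleftrightarrow>
     bij_betw fv (verts \<Gamma>) (verts \<Gamma>) \<and> bij_betw fe (edges \<Gamma>) (edges \<Gamma>) \<and>
     (\<forall>e \<in> edges \<Gamma>. init \<Gamma> (fe e) = fv (init \<Gamma> e) \<and> einv \<Gamma> (fe e) = fe (einv \<Gamma> e))"

definition vertex_transitive :: "('v,'e) sgraph \<Rightarrow> bool" where
  "vertex_transitive \<Gamma> \<longleftrightarrow>
     (\<forall>u \<in> verts \<Gamma>. \<forall>v \<in> verts \<Gamma>. \<exists>fv fe. graph_aut \<Gamma> fv fe \<and> fv u = v)"

text \<open>Schreier graph Sch(G,H,X): vertices are right cosets Hg; the edge (C,a) is the edge
  labelled a from C to C a; its inverse is the edge labelled a^{-1} from C a.\<close>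
definition schreier :: "'i set \<Rightarrow> 'j set \<Rightarrow> ('i,'j) gen list set \<Rightarrow>
    (('i,'j) gen list set, ('i,'j) gen list set \<times> ('i,'j) gen) sgraph" where
  "schreier I J H = \<lparr> verts = rcosets\<^bsub>FP I J\<^esub> H,
     edges = {(C, a). C \<in> rcosets\<^bsub>FP I J\<^esub> H \<and> a \<in> gens I J},
     init = fst,
     einv = (\<lambda>(C, a). (C #>\<^bsub>FP I J\<^esub> [a], ginv a)) \<rparr>"

end

theory Submission imports Defs begin

lemma ginv_ginv[simp]: "ginv (ginv a) = a"
  by (cases a) auto

definition step :: "('i,'j) gen \<Rightarrow> ('i,'j) gen list \<Rightarrow> ('i,'j) gen list" where
  "step a acc = (case acc of [] \<Rightarrow> [a] | b # r \<Rightarrow> (if b = ginv a then r else a # b # r))"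

lemma reduce_Nil[simp]: "reduce [] = []"
  by (simp add: reduce_def)

lemma reduce_Cons: "reduce (a # w) = step a (reduce w)"
  by (simp add: reduce_def step_def)

lemma reduced_Cons: "reduced (a # w) \<longleftrightarrow> reduced w \<and> (w \<noteq> [] \<longrightarrow> hd w \<noteq> ginv a)"
  by (cases w) auto

lemma reduced_step: "reduced r \<Longrightarrow> reduced (step a r)"
  by (cases r) (auto simp: step_def reduced_Cons)

lemma reduced_reduce: "reduced (reduce w)"
  by (induction w) (auto simp: reduce_Cons reduced_step)

lemma reduce_reduced: "reduced w \<Longrightarrow> reduce w = w"
proof (induction w)
  case Nil then show ?case by simp
next
  case (Cons a w)
  then show ?case by (cases w) (auto simp: reduce_Cons step_def reduced_Cons)
qed

lemma reduce_idem[simp]: "reduce (reduce w) = reduce w"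
  by (simp add: reduce_reduced reduced_reduce)

lemma step_cancel: "reduced x \<Longrightarrow> step a (step (ginv a) x) = x"
  by (cases x) (auto simp: step_def reduced_Cons neq_Nil_conv split: list.splits)

lemma reduce_append_right: "reduce (u @ v) = reduce (u @ reduce v)"
  by (induction u) (auto simp: reduce_Cons)

lemma reduce_step_append: "reduce (step a r @ v) = step a (reduce (r @ v))"
proof (cases r)
  case Nil then show ?thesis by (simp add: step_def reduce_Cons)
next
  case (Cons b r')
  show ?thesis
  proof (cases "b = ginv a")
    case True
    have "step a (reduce (r @ v)) = step a (step (ginv a) (reduce (r' @ v)))"
      using Cons True by (simp add: reduce_Cons)
    also have "\<dots> = reduce (r' @ v)" by (rule step_cancel[OF reduced_reduce])
    finally show ?thesis using Cons True by (simp add: step_def)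
  next
    case False then show ?thesis using Cons by (simp add: step_def reduce_Cons)
  qed
qed

lemma reduce_append_left: "reduce (u @ v) = reduce (reduce u @ v)"
  by (induction u) (auto simp: reduce_Cons reduce_step_append)

lemma reduce_mid: "reduce (x @ reduce y @ z) = reduce (x @ y @ z)"
  by (metis reduce_append_left reduce_append_right)

definition winv :: "('i,'j) gen list \<Rightarrow> ('i,'j) gen list" where
  "winv u = rev (map ginv u)"

lemma winv_simps[simp]: "winv [] = []" "winv (a # u) = winv u @ [ginv a]"
  "winv (u @ v) = winv v @ winv u" "winv (winv u) = u" "length (winv u) = length u"
  by (auto simp: winv_def rev_map[symmetric] map_map o_def)

lemma reduce_cancel_pair: "reduce (x @ [a, ginv a] @ y) = reduce (x @ y)"
proof -
  have "reduce ([a, ginv a] @ y) = reduce y"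
    using step_cancel[OF reduced_reduce, of a y] by (simp add: reduce_Cons)
  then show ?thesis by (metis reduce_append_right)
qed

lemma reduce_cancel_winv: "reduce (x @ winv u @ u @ y) = reduce (x @ y)"
proof (induction u arbitrary: x y rule: rev_induct)
  case Nil then show ?case by simp
next
  case (snoc a u)
  have "reduce (x @ winv (u @ [a]) @ (u @ [a]) @ y) = reduce ((x @ [ginv a]) @ winv u @ u @ ([a] @ y))"
    by simp
  also have "\<dots> = reduce ((x @ [ginv a]) @ ([a] @ y))" using snoc.IH by blast
  also have "\<dots> = reduce (x @ [ginv a, a] @ y)" by simp
  also have "\<dots> = reduce (x @ y)" using reduce_cancel_pair[of x "ginv a" y] by simp
  finally show ?case .
qed

lemma reduce_cancel_winv': "reduce (x @ u @ winv u @ y) = reduce (x @ y)"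
  using reduce_cancel_winv[of x "winv u" y] by simp

lemma set_reduce: "set (reduce w) \<subseteq> set w"
proof (induction w)
  case (Cons a w) then show ?case
    by (auto simp: reduce_Cons step_def split: list.splits if_splits)
qed simp

lemma length_reduce: "length (reduce w) \<le> length w"
proof (induction w)
  case (Cons a w) then show ?case
    by (auto simp: reduce_Cons step_def split: list.splits if_splits)
qed simp

lemma reduced_nth: "reduced w \<longleftrightarrow> (\<forall>i. Suc i < length w \<longrightarrow> w ! Suc i \<noteq> ginv (w ! i))"
proof (induction w rule: reduced.induct)
  case (3 a b w)
  show ?case
    apply (simp add: 3)
    apply (auto simp: nth_Cons split: nat.splits)
    done
qed auto

lemma reduced_append: "reduced (x @ y) \<longleftrightarrow> reduced x \<and> reduced y \<and>
   (x \<noteq> [] \<longrightarrow> y \<noteq> [] \<longrightarrow> hd y \<noteq> ginv (last x))"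
proof (induction x)
  case Nil then show ?case by simp
next
  case (Cons a x)
  then show ?case by (cases x) (auto simp: reduced_Cons)
qed

lemma reduced_take: "reduced w \<Longrightarrow> reduced (take k w)"
  by (auto simp: reduced_nth)

lemma reduced_drop: "reduced w \<Longrightarrow> reduced (drop k w)"
  by (metis append_take_drop_id reduced_append)

lemma reduced_winv: "reduced w \<Longrightarrow> reduced (winv w)"
proof (induction w)
  case (Cons a w)
  then show ?case
    by (auto simp: reduced_Cons reduced_append winv_def hd_map hd_rev last_map last_rev)
qed simp

lemma ginv_eq_iff: "ginv a = b \<longleftrightarrow> a = ginv b"
  by auto


lemma FP_carrier: "carrier (FP I J) = {w. set w \<subseteq> gens I J \<and> reduced w}"
  by (simp add: FP_def)
lemma FP_mult[simp]: "x \<otimes>\<^bsub>FP I J\<^esub> y = reduce (x @ y)"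
  by (simp add: FP_def)
lemma FP_one[simp]: "\<one>\<^bsub>FP I J\<^esub> = []"
  by (simp add: FP_def)

lemma ginv_gens[simp]: "ginv a \<in> gens I J \<longleftrightarrow> a \<in> gens I J"
  by (cases a) (auto simp: gens_def)

lemma set_winv: "set (winv u) = ginv ` set u"
  by (simp add: winv_def)

lemma winv_carrier: "u \<in> carrier (FP I J) \<Longrightarrow> winv u \<in> carrier (FP I J)"
  by (auto simp: FP_carrier set_winv reduced_winv)

lemma reduce_carrier: "set w \<subseteq> gens I J \<Longrightarrow> reduce w \<in> carrier (FP I J)"
  using set_reduce[of w] reduced_reduce[of w] by (auto simp: FP_carrier)

lemma FP_group: "group (FP I J)"
proof (rule groupI)
  fix x y assume "x \<in> carrier (FP I J)" "y \<in> carrier (FP I J)"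
  then show "x \<otimes>\<^bsub>FP I J\<^esub> y \<in> carrier (FP I J)"
    using reduce_carrier[of "x @ y"] by (auto simp: FP_carrier)
next
  show "\<one>\<^bsub>FP I J\<^esub> \<in> carrier (FP I J)" by (simp add: FP_carrier)
next
  fix x y z assume "x \<in> carrier (FP I J)" "y \<in> carrier (FP I J)" "z \<in> carrier (FP I J)"
  show "x \<otimes>\<^bsub>FP I J\<^esub> y \<otimes>\<^bsub>FP I J\<^esub> z = x \<otimes>\<^bsub>FP I J\<^esub> (y \<otimes>\<^bsub>FP I J\<^esub> z)"
    by (simp add: reduce_append_left[of "x @ y" z, symmetric] reduce_append_right[of x "y @ z", symmetric])
next
  fix x assume "x \<in> carrier (FP I J)"
  then show "\<one>\<^bsub>FP I J\<^esub> \<otimes>\<^bsub>FP I J\<^esub> x = x" by (simp add: FP_carrier reduce_reduced)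
next
  fix x assume x: "x \<in> carrier (FP I J)"
  show "\<exists>y\<in>carrier (FP I J). y \<otimes>\<^bsub>FP I J\<^esub> x = \<one>\<^bsub>FP I J\<^esub>"
  proof
    show "winv x \<in> carrier (FP I J)" using winv_carrier[OF x] .
    show "winv x \<otimes>\<^bsub>FP I J\<^esub> x = \<one>\<^bsub>FP I J\<^esub>"
      using reduce_cancel_winv[of "[]" x "[]"] by simp
  qed
qed

lemma FP_inv: "x \<in> carrier (FP I J) \<Longrightarrow> inv\<^bsub>FP I J\<^esub> x = winv x"
  by (rule group.inv_equality[OF FP_group])
    (use winv_carrier[of x] reduce_cancel_winv[of "[]" x "[]"] in simp_all)

lemma FP_carrier_reduced: "x \<in> carrier (FP I J) \<Longrightarrow> reduced x"
  by (simp add: FP_carrier)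

lemma FP_carrier_take: "x \<in> carrier (FP I J) \<Longrightarrow> take k x \<in> carrier (FP I J)"
  by (auto simp: FP_carrier reduced_take dest: in_set_takeD)

lemma FP_carrier_drop: "x \<in> carrier (FP I J) \<Longrightarrow> drop k x \<in> carrier (FP I J)"
  by (auto simp: FP_carrier reduced_drop dest: in_set_dropD)

lemma FP_mult_reduced: "reduced (x @ y) \<Longrightarrow> x \<otimes>\<^bsub>FP I J\<^esub> y = x @ y"
  by (simp add: reduce_reduced)


fun cp :: "'a list \<Rightarrow> 'a list \<Rightarrow> nat" where
  "cp (a # u) (b # v) = (if a = b then Suc (cp u v) else 0)"
| "cp _ _ = 0"

lemma cp_sym: "cp u v = cp v u"
  by (induction u v rule: cp.induct) auto

lemma cp_le: "cp u v \<le> length u" "cp u v \<le> length v"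
  by (induction u v rule: cp.induct) auto

lemma cp_take_eq: "take (cp u v) u = take (cp u v) v"
  by (induction u v rule: cp.induct) auto

lemma cp_nth_neq: "cp u v < length u \<Longrightarrow> cp u v < length v \<Longrightarrow> u ! cp u v \<noteq> v ! cp u v"
  by (induction u v rule: cp.induct) auto

lemma take_eq_iff_cp: "k \<le> length u \<Longrightarrow> k \<le> length v \<Longrightarrow> take k u = take k v \<longleftrightarrow> k \<le> cp u v"
proof (induction u v arbitrary: k rule: cp.induct)
  case (1 a u b v)
  then show ?case by (cases k) auto
qed auto

lemma cp_take: "cp (take k u) v = min k (cp u v)"
proof (induction u v arbitrary: k rule: cp.induct)
  case (1 a u b v)
  then show ?case by (cases k) auto
qed (auto simp: cp.simps(2,3))

lemma cp_self_append: "cp u (u @ v) = length u"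
  by (induction u) auto

lemma cp_take2: "cp (take k u) (take k' v) = min k (min k' (cp u v))"
proof -
  have "cp u (take k' v) = min k' (cp u v)"
    by (metis cp_take cp_sym)
  then show ?thesis by (simp add: cp_take)
qed

lemma cp_append_same: "cp (w @ u) (w @ v) = length w + cp u v"
  by (induction w) auto


lemma winv_nth: "i < length u \<Longrightarrow> winv u ! i = ginv (u ! (length u - Suc i))"
  by (simp add: winv_def rev_nth)

lemma take_winv: "c \<le> length u \<Longrightarrow> take c (winv u) = winv (drop (length u - c) u)"
  by (simp add: winv_def take_rev drop_map)

lemma prod_formula:
  assumes ru: "reduced u" and rv: "reduced v" and c: "c = cp (winv u) v"
  shows "reduce (u @ v) = take (length u - c) u @ drop c v"
    and "reduced (take (length u - c) u @ drop c v)"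
proof -
  have cu: "c \<le> length u" using cp_le(1)[of "winv u" v] c by simp
  have cv: "c \<le> length v" using cp_le(2)[of "winv u" v] c by simp
  define s where "s = drop (length u - c) u"
  define u' where "u' = take (length u - c) u"
  have u: "u = u' @ s" by (simp add: s_def u'_def)
  have "take c (winv u) = take c v" using cp_take_eq[of "winv u" v] c by simp
  then have "winv s = take c v" using take_winv[OF cu] by (simp add: s_def)
  then have v: "v = winv s @ drop c v" by simp
  have "reduce (u @ v) = reduce (u' @ s @ winv s @ drop c v)"
    using u v by (metis append_assoc)
  also have "\<dots> = reduce (u' @ drop c v)" by (rule reduce_cancel_winv')
  finally have eq: "reduce (u @ v) = u' @ drop c v \<or> \<not> reduced (u' @ drop c v)"
    using reduce_reduced by auto
  have red: "reduced (u' @ drop c v)"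
  proof (subst reduced_append, intro conjI impI)
    show "reduced u'" using ru by (simp add: u'_def reduced_take)
    show "reduced (drop c v)" using rv by (simp add: reduced_drop)
    assume ne: "u' \<noteq> []" "drop c v \<noteq> []"
    then have lt: "c < length u" "c < length v" using cu by (auto simp: u'_def)
    have "winv u ! c \<noteq> v ! c" using cp_nth_neq[of "winv u" v] c lt by simp
    moreover have "winv u ! c = ginv (u ! (length u - Suc c))" using winv_nth[of c u] lt by simp
    moreover have "last u' = u ! (length u - Suc c)"
      using ne lt by (simp add: u'_def last_conv_nth)
    moreover have "hd (drop c v) = v ! c" using lt by (simp add: hd_drop_conv_nth)
    ultimately show "hd (drop c v) \<noteq> ginv (last u')" by auto
  qed
  show "reduce (u @ v) = take (length u - c) u @ drop c v"
    using eq red by (simp add: u'_def)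
  show "reduced (take (length u - c) u @ drop c v)" using red by (simp add: u'_def)
qed

lemma prod_length:
  assumes "reduced u" "reduced v"
  shows "length (reduce (u @ v)) = length u + length v - 2 * cp (winv u) v"
proof -
  have "cp (winv u) v \<le> length u" "cp (winv u) v \<le> length v"
    using cp_le[of "winv u" v] by auto
  then show ?thesis using prod_formula(1)[OF assms refl] by simp
qed

lemma prod_take:
  assumes ru: "reduced u" and rv: "reduced v" and j: "j \<le> length v" and c: "c = cp (winv u) v"
  shows "reduce (u @ take j v) = (if j \<le> c then take (length u - j) u
                                 else take (length u - c + (j - c)) (reduce (u @ v)))"
proof -
  have cu: "c \<le> length u" using cp_le(1)[of "winv u" v] c by simp
  have cj: "cp (winv u) (take j v) = min j c"
    using c by (metis cp_take cp_sym)
  have A: "reduce (u @ take j v) = take (length u - min j c) u @ drop (min j c) (take j v)"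
    using prod_formula(1)[OF ru reduced_take[OF rv] refl] cj by simp
  show ?thesis
  proof (cases "j \<le> c")
    case True then show ?thesis using A by simp
  next
    case False
    have "reduce (u @ take j v) = take (length u - c) u @ take (j - c) (drop c v)"
      using A False by (simp add: drop_take)
    also have "\<dots> = take (length u - c + (j - c)) (take (length u - c) u @ drop c v)"
      using cu by simp
    also have "\<dots> = take (length u - c + (j - c)) (reduce (u @ v))"
      using prod_formula(1)[OF ru rv c] by simp
    finally show ?thesis using False by simp
  qed
qed


lemma foldr_prod: "foldr (\<lambda>a acc. [a] \<otimes>\<^bsub>FP I J\<^esub> acc) w \<one>\<^bsub>FP I J\<^esub> = reduce w"
proof (induction w)
  case (Cons a w)
  then show ?case using reduce_append_right[of "[a]" w] by simp
qed simp

lemma word_length_eq: "x \<in> carrier (FP I J) \<Longrightarrow> word_length I J x = length x"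
  unfolding word_length_def foldr_prod
proof (rule Least_equality)
  assume x: "x \<in> carrier (FP I J)"
  then show "\<exists>w. length w = length x \<and> set w \<subseteq> gens I J \<and> reduce w = x"
    by (intro exI[of _ x]) (auto simp: FP_carrier reduce_reduced)
next
  fix n assume "\<exists>w. length w = n \<and> set w \<subseteq> gens I J \<and> reduce w = x"
  then show "length x \<le> n" using length_reduce by blast
qed

definition Pref :: "('i,'j) gen list set \<Rightarrow> ('i,'j) gen list set" where
  "Pref K = {take k x | x k. x \<in> K}"

lemma Pref_take: "p \<in> Pref K \<Longrightarrow> take m p \<in> Pref K"
proof -
  assume "p \<in> Pref K"
  then obtain x k where "x \<in> K" "p = take k x" unfolding Pref_def by blast
  then have "take m p = take (min m k) x" by simp
  then show ?thesis using \<open>x \<in> K\<close> unfolding Pref_def by blast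
qed

lemma Pref_I: "x \<in> K \<Longrightarrow> take k x \<in> Pref K"
  unfolding Pref_def by auto

lemma Pref_E:
  assumes "p \<in> Pref K"
  obtains x j where "x \<in> K" "j \<le> length x" "p = take j x"
proof -
  obtain x k where "x \<in> K" "p = take k x" using assms unfolding Pref_def by auto
  then show ?thesis using that[of x "min k (length x)"] by (simp add: min_def)
qed

lemma Pref_carrier: "subgroup K (FP I J) \<Longrightarrow> Pref K \<subseteq> carrier (FP I J)"
  by (auto elim!: Pref_E intro!: FP_carrier_take dest: subgroup.mem_carrier)

lemma Pref_invariant:
  assumes K: "subgroup K (FP I J)" and k: "k \<in> K" and p: "p \<in> Pref K"
  shows "k \<otimes>\<^bsub>FP I J\<^esub> p \<in> Pref K"
proof -
  obtain k' j where k': "k' \<in> K" "j \<le> length k'" "p = take j k'" using p by (rule Pref_E)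
  have r: "reduced k" "reduced k'"
    using k k' K by (auto dest: subgroup.mem_carrier simp: FP_carrier)
  have kk: "reduce (k @ k') \<in> K" using subgroup.m_closed[OF K k k'(1)] by simp
  show ?thesis
    using prod_take[OF r k'(2) refl] k' by (auto intro: Pref_I[OF k] Pref_I[OF kk])
qed

lemma long_word:
  assumes two: "\<forall>a\<in>gens I J. \<exists>c\<in>gens I J. c \<noteq> ginv a" and a: "a \<in> gens I J"
  shows "\<exists>z. set z \<subseteq> gens I J \<and> reduced (a # z) \<and> length z = N"
  using a
proof (induction N arbitrary: a)
  case 0 then show ?case by auto
next
  case (Suc N)
  obtain c where c: "c \<in> gens I J" "c \<noteq> ginv a" using two Suc.prems by blast
  obtain z where z: "set z \<subseteq> gens I J" "reduced (c # z)" "length z = N" using Suc.IH[OF c(1)] by blast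
  show ?case using z c by (intro exI[of _ "c # z"]) auto
qed

lemma hd_winv: "z \<noteq> [] \<Longrightarrow> hd (winv z) = ginv (last z)"
  by (simp add: winv_def hd_rev last_map)
lemma last_winv: "z \<noteq> [] \<Longrightarrow> last (winv z) = ginv (hd z)"
  by (simp add: winv_def last_rev hd_map)


lemma winv_reduce: "winv (reduce w) = reduce (winv w)"
proof -
  have G: "group (FP UNIV UNIV)" by (rule FP_group)
  have x: "reduce w \<in> carrier (FP UNIV UNIV)"
    by (rule reduce_carrier) (simp add: gens_def split: gen.splits)
  have y: "reduce (winv w) \<in> carrier (FP UNIV UNIV)"
    by (rule reduce_carrier) (simp add: gens_def split: gen.splits)
  have "reduce (winv w) \<otimes>\<^bsub>FP UNIV UNIV\<^esub> reduce w = \<one>\<^bsub>FP UNIV UNIV\<^esub>"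
    using reduce_mid[of "[]" "winv w" "reduce w"] reduce_mid[of "winv w" w "[]"]
      reduce_cancel_winv[of "[]" w "[]"] by simp
  then have "inv\<^bsub>FP UNIV UNIV\<^esub> reduce w = reduce (winv w)"
    using group.inv_equality[OF G] x y by blast
  then show ?thesis using FP_inv[OF x] by simp
qed


lemma far_conjugate:
  assumes K: "subgroup K (FP I J)" and w: "w \<in> carrier (FP I J)" "w \<notin> Pref K"
    and two: "\<forall>a\<in>gens I J. \<exists>c\<in>gens I J. c \<noteq> ginv a"
  shows "\<exists>g\<in>carrier (FP I J). \<forall>k\<in>K. k \<noteq> [] \<longrightarrow>
            N < length (inv\<^bsub>FP I J\<^esub> g \<otimes>\<^bsub>FP I J\<^esub> k \<otimes>\<^bsub>FP I J\<^esub> g)"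
proof -
  let ?P = "\<lambda>w. w \<in> carrier (FP I J) \<and> w \<notin> Pref K"
  obtain w0 where w0: "?P w0" and min: "\<And>y. ?P y \<Longrightarrow> length w0 \<le> length y"
    using ex_has_least_nat[of ?P w length] w by blast
  have "[] \<in> K" using subgroup.one_closed[OF K] by simp
  then have "[] \<in> Pref K" using Pref_I[of "[]" K 0] by simp
  then have "w0 \<noteq> []" using w0 by auto
  define q where "q = butlast w0"
  define a where "a = last w0"
  have w0q: "w0 = q @ [a]" using \<open>w0 \<noteq> []\<close> by (simp add: q_def a_def)
  have qc: "q \<in> carrier (FP I J)" using FP_carrier_take[OF conjunct1[OF w0], of "length w0 - 1"]
    by (simp add: q_def butlast_conv_take)
  have qP: "q \<in> Pref K"
  proof (rule ccontr)
    assume "q \<notin> Pref K"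
    then have "length w0 \<le> length q" using min qc by blast
    then show False using w0q by simp
  qed
  have ag: "a \<in> gens I J" using w0 \<open>w0 \<noteq> []\<close> by (auto simp: FP_carrier a_def)
  have rw0: "reduced (q @ [a])" using w0 w0q by (simp add: FP_carrier)
  obtain z where z: "set z \<subseteq> gens I J" "reduced (a # z)" "length z = N"
    using long_word[OF two ag] by blast
  have rz: "reduced z" using z(2) by (simp add: reduced_Cons)
  have hz: "z \<noteq> [] \<Longrightarrow> hd z \<noteq> ginv a" using z(2) by (simp add: reduced_Cons)
  define g where "g = q @ [a] @ z"
  have r1: "reduced q \<and> (q \<noteq> [] \<longrightarrow> a \<noteq> ginv (last q))"
    using rw0 reduced_append[of q "[a]"] by simp
  have rg: "reduced g" unfolding g_def
    using r1 z(2) reduced_append[of q "a # z"] by simp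
  have "set w0 \<subseteq> gens I J" using w0 by (simp add: FP_carrier)
  moreover have "g = w0 @ z" by (simp add: g_def w0q)
  ultimately have gc: "g \<in> carrier (FP I J)" using rg z(1) unfolding FP_carrier by simp
  have Kc: "\<And>k. k \<in> K \<Longrightarrow> k \<in> carrier (FP I J)" by (rule subgroup.mem_carrier[OF K])
  have hdk: "hd (reduce (winv q @ k @ q)) \<noteq> a" if k: "k \<in> K" "reduce (winv q @ k @ q) \<noteq> []" for k
  proof
    define r where "r = reduce (winv q @ k @ q)"
    assume ha: "hd (reduce (winv q @ k @ q)) = a"
    have "r = a # tl r"
      using list.collapse[of r] k(2) ha unfolding r_def by simp
    then obtain r' where r: "r = a # r'" by (rule that)
    have rr: "reduced r" unfolding r_def by (rule reduced_reduce)
    have rqr: "reduced (q @ r)" using r1 rr r reduced_append[of q r] by simp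
    have "reduce (q @ r) = reduce (q @ winv q @ k @ q)" unfolding r_def by (rule reduce_append_right[symmetric])
    also have "\<dots> = reduce (k @ q)" using reduce_cancel_winv'[of "[]" q "k @ q"] by (simp only: append_Nil)
    finally have "k \<otimes>\<^bsub>FP I J\<^esub> q = q @ r" using reduce_reduced[OF rqr] by simp
    moreover have "k \<otimes>\<^bsub>FP I J\<^esub> q \<in> Pref K" by (rule Pref_invariant[OF K k(1) qP])
    ultimately have "take (length q + 1) (q @ r) \<in> Pref K" using Pref_take by metis
    then have "w0 \<in> Pref K" using r w0q by simp
    then show False using w0 by blast
  qed
  have "N < length (inv\<^bsub>FP I J\<^esub> g \<otimes>\<^bsub>FP I J\<^esub> k \<otimes>\<^bsub>FP I J\<^esub> g)" if k: "k \<in> K" "k \<noteq> []" for k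
  proof -
    define k2 where "k2 = reduce (winv q @ k @ q)"
    have kc: "k \<in> carrier (FP I J)" using Kc k by blast
    have k2ne: "k2 \<noteq> []"
    proof
      assume k20: "k2 = []"
      have "reduce k = reduce (q @ winv q @ k @ q @ winv q)"
        using reduce_cancel_winv'[of "[]" q "k @ q @ winv q"] reduce_cancel_winv'[of k q "[]"] by simp
      also have "\<dots> = reduce (q @ reduce (winv q @ k @ q) @ winv q)"
        using reduce_mid[of q "winv q @ k @ q" "winv q"] by simp
      also have "\<dots> = []" using k20 reduce_cancel_winv'[of "[]" q "[]"] by (simp add: k2_def)
      finally have "reduce k = []" .
      then show False using k kc by (simp add: FP_carrier reduce_reduced)
    qed
    have hd1: "hd k2 \<noteq> a" using hdk[OF k(1)] k2ne by (simp add: k2_def)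
    have ik: "winv k \<in> K" using subgroup.m_inv_closed[OF K k(1)] FP_inv[OF kc] by simp
    have "winv k2 = reduce (winv q @ winv k @ q)"
      unfolding k2_def winv_reduce by simp
    moreover have "winv k2 \<noteq> []" using k2ne by (simp add: winv_def)
    ultimately have "hd (winv k2) \<noteq> a" using hdk[OF ik] by simp
    then have last1: "last k2 \<noteq> ginv a" using hd_winv[OF k2ne] by auto
    have rk2: "reduced k2" by (simp add: k2_def reduced_reduce)
    define Xw where "Xw = winv z @ [ginv a] @ k2 @ [a] @ z"
    have rX1: "reduced (k2 @ a # z)" using rk2 z(2) last1 k2ne reduced_append[of k2 "a # z"] by auto
    have rX2: "reduced (ginv a # k2 @ a # z)" using rX1 hd1 k2ne by (simp add: reduced_Cons)
    have rX3: "reduced (winv z @ ginv a # k2 @ a # z)"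
      using rX2 reduced_winv[OF rz] hz reduced_append[of "winv z" "ginv a # k2 @ a # z"]
      by (cases "z = []") (auto simp: last_winv)
    have rXw: "reduced Xw" unfolding Xw_def using rX3 by simp
    have "inv\<^bsub>FP I J\<^esub> g \<otimes>\<^bsub>FP I J\<^esub> k \<otimes>\<^bsub>FP I J\<^esub> g = reduce (winv g @ k @ g)"
      using gc by (simp add: FP_inv reduce_append_left[symmetric])
    also have "\<dots> = reduce (winv z @ [ginv a] @ reduce (winv q @ k @ q) @ [a] @ z)"
      using reduce_mid[of "winv z @ [ginv a]" "winv q @ k @ q" "[a] @ z"] by (simp add: g_def)
    also have "\<dots> = Xw" using reduce_reduced[OF rXw] by (simp add: Xw_def k2_def)
    finally show ?thesis using z(3) by (simp add: Xw_def)
  qed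
  then show ?thesis using gc by blast
qed


lemma graph_aut_inv:
  assumes A: "graph_aut \<Gamma> fv fe"
    and wf: "\<forall>e\<in>edges \<Gamma>. init \<Gamma> e \<in> verts \<Gamma> \<and> einv \<Gamma> e \<in> edges \<Gamma>"
  shows "graph_aut \<Gamma> (inv_into (verts \<Gamma>) fv) (inv_into (edges \<Gamma>) fe)"
proof -
  have bv: "bij_betw fv (verts \<Gamma>) (verts \<Gamma>)" and be: "bij_betw fe (edges \<Gamma>) (edges \<Gamma>)"
    and c: "\<forall>e \<in> edges \<Gamma>. init \<Gamma> (fe e) = fv (init \<Gamma> e) \<and> einv \<Gamma> (fe e) = fe (einv \<Gamma> e)"
    using A by (auto simp: graph_aut_def)
  have "init \<Gamma> (inv_into (edges \<Gamma>) fe e) = inv_into (verts \<Gamma>) fv (init \<Gamma> e)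
        \<and> einv \<Gamma> (inv_into (edges \<Gamma>) fe e) = inv_into (edges \<Gamma>) fe (einv \<Gamma> e)"
    if e: "e \<in> edges \<Gamma>" for e
  proof -
    define e' where "e' = inv_into (edges \<Gamma>) fe e"
    have e': "e' \<in> edges \<Gamma>" "fe e' = e"
      using e be by (auto simp: e'_def bij_betw_def inv_into_into f_inv_into_f)
    have "init \<Gamma> e = fv (init \<Gamma> e')" using c e' by metis
    then have 1: "inv_into (verts \<Gamma>) fv (init \<Gamma> e) = init \<Gamma> e'"
      using bv wf e' by (simp add: bij_betw_def inv_into_f_f)
    have "einv \<Gamma> e = fe (einv \<Gamma> e')" using c e' by metis
    then have 2: "inv_into (edges \<Gamma>) fe (einv \<Gamma> e) = einv \<Gamma> e'"
      using be wf e' by (simp add: bij_betw_def inv_into_f_f)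
    show ?thesis using 1 2 by (simp add: e'_def)
  qed
  then show ?thesis
    using bij_betw_inv_into[OF bv] bij_betw_inv_into[OF be] by (simp add: graph_aut_def)
qed

lemma graph_aut_comp:
  assumes A: "graph_aut \<Gamma> f1 g1" and B: "graph_aut \<Gamma> f2 g2"
  shows "graph_aut \<Gamma> (f2 \<circ> f1) (g2 \<circ> g1)"
proof -
  have b: "bij_betw g1 (edges \<Gamma>) (edges \<Gamma>)" using A by (simp add: graph_aut_def)
  then have "g1 e \<in> edges \<Gamma>" if "e \<in> edges \<Gamma>" for e using that by (auto simp: bij_betw_def)
  then show ?thesis using A B unfolding graph_aut_def
    by (auto intro: bij_betw_trans)
qed

lemma schreier_simps:
  "verts (schreier I J H) = rcosets\<^bsub>FP I J\<^esub> H"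
  "edges (schreier I J H) = {(C, a). C \<in> rcosets\<^bsub>FP I J\<^esub> H \<and> a \<in> gens I J}"
  "init (schreier I J H) = fst"
  "einv (schreier I J H) (C, a) = (C #>\<^bsub>FP I J\<^esub> [a], ginv a)"
  by (simp_all add: schreier_def)

lemma singleton_carrier: "a \<in> gens I J \<Longrightarrow> [a] \<in> carrier (FP I J)"
  by (simp add: FP_carrier)

lemma rcosets_step:
  assumes H: "subgroup H (FP I J)" and C: "C \<in> rcosets\<^bsub>FP I J\<^esub> H" and a: "a \<in> gens I J"
  shows "C #>\<^bsub>FP I J\<^esub> [a] \<in> rcosets\<^bsub>FP I J\<^esub> H"
proof -
  interpret G: group "FP I J" by (rule FP_group)
  obtain x where x: "x \<in> carrier (FP I J)" "C = H #>\<^bsub>FP I J\<^esub> x" using C unfolding RCOSETS_def by auto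
  have "C #>\<^bsub>FP I J\<^esub> [a] = H #>\<^bsub>FP I J\<^esub> (x \<otimes>\<^bsub>FP I J\<^esub> [a])"
    using x G.coset_mult_assoc[of H x "[a]"] subgroup.subset[OF H] singleton_carrier[OF a] by simp
  then show ?thesis
    using G.rcosetsI[OF subgroup.subset[OF H] G.m_closed[OF x(1) singleton_carrier[OF a]]] by simp
qed

lemma schreier_wf:
  assumes H: "subgroup H (FP I J)"
  shows "\<forall>e\<in>edges (schreier I J H). init (schreier I J H) e \<in> verts (schreier I J H)
            \<and> einv (schreier I J H) e \<in> edges (schreier I J H)"
  using rcosets_step[OF H] by (auto simp: schreier_simps)

lemma H_in_rcosets:
  assumes H: "subgroup H (FP I J)"
  shows "H \<in> rcosets\<^bsub>FP I J\<^esub> H"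
proof -
  interpret G: group "FP I J" by (rule FP_group)
  show ?thesis using G.rcosetsI[OF subgroup.subset[OF H], of "[]"] G.coset_mult_one[OF subgroup.subset[OF H]]
    by (simp add: FP_carrier)
qed

lemma vt_from_base:
  assumes H: "subgroup H (FP I J)"
    and A: "\<And>x. x \<in> carrier (FP I J) \<Longrightarrow> \<exists>fv fe. graph_aut (schreier I J H) fv fe \<and> fv H = H #>\<^bsub>FP I J\<^esub> x"
  shows "vertex_transitive (schreier I J H)"
  unfolding vertex_transitive_def
proof (intro ballI)
  fix u v assume u: "u \<in> verts (schreier I J H)" and v: "v \<in> verts (schreier I J H)"
  obtain x where x: "x \<in> carrier (FP I J)" "u = H #>\<^bsub>FP I J\<^esub> x" using u by (auto simp: schreier_simps RCOSETS_def)
  obtain y where y: "y \<in> carrier (FP I J)" "v = H #>\<^bsub>FP I J\<^esub> y" using v by (auto simp: schreier_simps RCOSETS_def)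
  obtain f1 g1 where A1: "graph_aut (schreier I J H) f1 g1" "f1 H = u" using A[OF x(1)] x by blast
  obtain f2 g2 where A2: "graph_aut (schreier I J H) f2 g2" "f2 H = v" using A[OF y(1)] y by blast
  define f1' where "f1' = inv_into (verts (schreier I J H)) f1"
  define g1' where "g1' = inv_into (edges (schreier I J H)) g1"
  have A1': "graph_aut (schreier I J H) f1' g1'"
    unfolding f1'_def g1'_def by (rule graph_aut_inv[OF A1(1) schreier_wf[OF H]])
  have Hv: "H \<in> verts (schreier I J H)" using H_in_rcosets[OF H] by (simp add: schreier_simps)
  have "f1' u = H" using A1 Hv unfolding f1'_def graph_aut_def bij_betw_def
    by (metis inv_into_f_f)
  then show "\<exists>fv fe. graph_aut (schreier I J H) fv fe \<and> fv u = v"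
    using graph_aut_comp[OF A1' A2(1)] A2(2) by (intro exI[of _ "f2 \<circ> f1'"] exI[of _ "g2 \<circ> g1'"]) simp
qed


lemma len1: "length xs = 1 \<Longrightarrow> \<exists>b. xs = [b]"
  by (cases xs) auto

lemma adj_char:
  assumes p: "p \<in> carrier (FP I J)" and q: "q \<in> carrier (FP I J)"
  shows "(\<exists>a\<in>gens I J. q = p \<otimes>\<^bsub>FP I J\<^esub> [a]) \<longleftrightarrow>
    ((length q = length p + 1 \<and> cp p q = length p) \<or> (length p = length q + 1 \<and> cp p q = length q))"
proof
  assume "\<exists>a\<in>gens I J. q = p \<otimes>\<^bsub>FP I J\<^esub> [a]"
  then obtain a where a: "a \<in> gens I J" "q = reduce (p @ [a])" by auto
  have rp: "reduced p" using p by (simp add: FP_carrier)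
  show "(length q = length p + 1 \<and> cp p q = length p) \<or> (length p = length q + 1 \<and> cp p q = length q)"
  proof (cases "p \<noteq> [] \<and> last p = ginv a")
    case False
    then have "reduced (p @ [a])" using rp reduced_append[of p "[a]"] by auto
    then have "q = p @ [a]" using a reduce_reduced by simp
    then show ?thesis using cp_self_append[of p "[a]"] by simp
  next
    case True
    define p' where "p' = butlast p"
    have pp: "p = p' @ [ginv a]" using True append_butlast_last_id[of p] unfolding p'_def by simp
    have "q = reduce (p' @ [ginv a, ginv (ginv a)] @ [])" using a pp by simp
    also have "\<dots> = reduce p'" using reduce_cancel_pair[of p' "ginv a" "[]"] by simp
    also have "\<dots> = p'" using rp pp reduced_append[of p' "[ginv a]"] reduce_reduced[of p'] by simp
    finally have "q = p'" .
    moreover have "cp p p' = length p'" using cp_self_append[of p' "[ginv a]"] pp cp_sym by metis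
    ultimately show ?thesis using pp by simp
  qed
next
  assume A: "(length q = length p + 1 \<and> cp p q = length p) \<or> (length p = length q + 1 \<and> cp p q = length q)"
  have rp: "reduced p" and rq: "reduced q" and sp: "set p \<subseteq> gens I J" and sq: "set q \<subseteq> gens I J"
    using p q by (auto simp: FP_carrier)
  show "\<exists>a\<in>gens I J. q = p \<otimes>\<^bsub>FP I J\<^esub> [a]"
  proof (cases "length q = length p + 1 \<and> cp p q = length p")
    case True
    have t: "take (length p) q = p" using cp_take_eq[of p q] True by simp
    have "length (drop (length p) q) = 1" using True by simp
    then obtain b where b: "drop (length p) q = [b]" using len1 by blast
    have qq: "q = p @ [b]" using t b append_take_drop_id[of "length p" q] by simp
    have "b \<in> gens I J" using sq qq by auto
    moreover have "p \<otimes>\<^bsub>FP I J\<^esub> [b] = q" using qq rq reduce_reduced by simp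
    ultimately show ?thesis by blast
  next
    case False
    then have F: "length p = length q + 1" "cp p q = length q" using A by auto
    have t: "take (length q) p = q" using cp_take_eq[of p q] F by simp
    have "length (drop (length q) p) = 1" using F by simp
    then obtain c where c: "drop (length q) p = [c]" using len1 by blast
    have pp: "p = q @ [c]" using t c append_take_drop_id[of "length q" p] by simp
    have "c \<in> gens I J" using sp pp by auto
    moreover have "p \<otimes>\<^bsub>FP I J\<^esub> [ginv c] = q"
      using pp reduce_cancel_pair[of q c "[]"] rq reduce_reduced by simp
    ultimately show ?thesis by (metis ginv_gens)
  qed
qed

lemma rcos_eq_iff:
  assumes H: "subgroup H (FP I J)" and x: "x \<in> carrier (FP I J)" and y: "y \<in> carrier (FP I J)"
  shows "H #>\<^bsub>FP I J\<^esub> x = H #>\<^bsub>FP I J\<^esub> y \<longleftrightarrow> x \<otimes>\<^bsub>FP I J\<^esub> inv\<^bsub>FP I J\<^esub> y \<in> H"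
proof -
  interpret G: group "FP I J" by (rule FP_group)
  show ?thesis
  proof
    assume "H #>\<^bsub>FP I J\<^esub> x = H #>\<^bsub>FP I J\<^esub> y"
    then have "x \<in> H #>\<^bsub>FP I J\<^esub> y" using G.rcos_self[OF x H] by simp
    then show "x \<otimes>\<^bsub>FP I J\<^esub> inv\<^bsub>FP I J\<^esub> y \<in> H"
      using subgroup.rcos_module_imp[OF H G.is_group y] by blast
  next
    assume "x \<otimes>\<^bsub>FP I J\<^esub> inv\<^bsub>FP I J\<^esub> y \<in> H"
    then have "x \<in> H #>\<^bsub>FP I J\<^esub> y" using subgroup.rcos_module_rev[OF H G.is_group y x] by blast
    then show "H #>\<^bsub>FP I J\<^esub> x = H #>\<^bsub>FP I J\<^esub> y" using G.repr_independence[OF _ y H] by simp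
  qed
qed

lemma rcos_left_H:
  assumes H: "subgroup H (FP I J)" and h: "h \<in> H" and x: "x \<in> carrier (FP I J)"
  shows "H #>\<^bsub>FP I J\<^esub> (h \<otimes>\<^bsub>FP I J\<^esub> x) = H #>\<^bsub>FP I J\<^esub> x"
proof -
  interpret G: group "FP I J" by (rule FP_group)
  have hc: "h \<in> carrier (FP I J)" using subgroup.mem_carrier[OF H h] .
  have "(h \<otimes>\<^bsub>FP I J\<^esub> x) \<otimes>\<^bsub>FP I J\<^esub> inv\<^bsub>FP I J\<^esub> x = h"
    using hc x by (simp add: G.m_assoc G.r_inv del: FP_mult FP_one)
  then show ?thesis using rcos_eq_iff[OF H G.m_closed[OF hc x] x] h by simp
qed


declare FP_mult[simp del] FP_one[simp del]

lemma (in group) inv_cancel_left1: "x \<in> carrier G \<Longrightarrow> y \<in> carrier G \<Longrightarrow> inv x \<otimes> (x \<otimes> y) = y"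
  by (simp add: m_assoc[symmetric])
lemma (in group) inv_cancel_left2: "x \<in> carrier G \<Longrightarrow> y \<in> carrier G \<Longrightarrow> x \<otimes> (inv x \<otimes> y) = y"
  by (simp add: m_assoc[symmetric])

lemma main_construction:
  assumes H: "subgroup H (FP I J)" and g: "g \<in> carrier (FP I J)"
    and \<phi>c: "\<And>p. p \<in> carrier (FP I J) \<Longrightarrow> \<phi> p \<in> carrier (FP I J)"
    and \<phi>inj: "inj_on \<phi> (carrier (FP I J))"
    and \<phi>surj: "\<And>y. y \<in> carrier (FP I J) \<Longrightarrow> \<exists>p\<in>carrier (FP I J). \<phi> p = y"
    and \<phi>len: "\<And>p. p \<in> carrier (FP I J) \<Longrightarrow> length (\<phi> p) = length p"
    and \<phi>cp: "\<And>p p'. p \<in> carrier (FP I J) \<Longrightarrow> p' \<in> carrier (FP I J) \<Longrightarrow> cp (\<phi> p) (\<phi> p') = cp p p'"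
    and \<phi>0: "\<phi> [] = []"
    and \<phi>eq: "\<And>h p. h \<in> H \<Longrightarrow> p \<in> carrier (FP I J) \<Longrightarrow>
                \<phi> (h \<otimes>\<^bsub>FP I J\<^esub> p) = \<alpha> h \<otimes>\<^bsub>FP I J\<^esub> \<phi> p"
    and \<alpha>K: "\<alpha> ` H = (\<lambda>h. inv\<^bsub>FP I J\<^esub> g \<otimes>\<^bsub>FP I J\<^esub> h \<otimes>\<^bsub>FP I J\<^esub> g) ` H"
  shows "\<exists>fv fe. graph_aut (schreier I J H) fv fe \<and> fv H = H #>\<^bsub>FP I J\<^esub> g"
proof -
  interpret G: group "FP I J" by (rule FP_group)
  let ?G = "FP I J"
  let ?C = "carrier (FP I J)"
  have Hc: "\<And>h. h \<in> H \<Longrightarrow> h \<in> ?C" by (rule subgroup.mem_carrier[OF H])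
  have Hs: "H \<subseteq> ?C" by (rule subgroup.subset[OF H])
  have sc: "\<And>a. a \<in> gens I J \<Longrightarrow> [a] \<in> ?C" by (rule singleton_carrier)
  have \<alpha>c: "\<alpha> h \<in> ?C" if "h \<in> H" for h
  proof -
    have "\<alpha> h \<in> (\<lambda>h. inv\<^bsub>?G\<^esub> g \<otimes>\<^bsub>?G\<^esub> h \<otimes>\<^bsub>?G\<^esub> g) ` H" using \<alpha>K that by blast
    then obtain h' where "h' \<in> H" "\<alpha> h = inv\<^bsub>?G\<^esub> g \<otimes>\<^bsub>?G\<^esub> h' \<otimes>\<^bsub>?G\<^esub> g" by blast
    then show ?thesis using g Hc G.m_closed G.inv_closed by (simp)
  qed
  have lam_ex: "\<exists>b\<in>gens I J. \<phi> (p \<otimes>\<^bsub>?G\<^esub> [a]) = \<phi> p \<otimes>\<^bsub>?G\<^esub> [b]"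
    if p: "p \<in> ?C" and a: "a \<in> gens I J" for p a
  proof -
    have q: "p \<otimes>\<^bsub>?G\<^esub> [a] \<in> ?C" using G.m_closed[OF p sc[OF a]] .
    have "(length (p \<otimes>\<^bsub>?G\<^esub> [a]) = length p + 1 \<and> cp p (p \<otimes>\<^bsub>?G\<^esub> [a]) = length p) \<or>
          (length p = length (p \<otimes>\<^bsub>?G\<^esub> [a]) + 1 \<and> cp p (p \<otimes>\<^bsub>?G\<^esub> [a]) = length (p \<otimes>\<^bsub>?G\<^esub> [a]))"
      using adj_char[OF p q] a by blast
    then have "(length (\<phi> (p \<otimes>\<^bsub>?G\<^esub> [a])) = length (\<phi> p) + 1 \<and> cp (\<phi> p) (\<phi> (p \<otimes>\<^bsub>?G\<^esub> [a])) = length (\<phi> p)) \<or>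
          (length (\<phi> p) = length (\<phi> (p \<otimes>\<^bsub>?G\<^esub> [a])) + 1 \<and> cp (\<phi> p) (\<phi> (p \<otimes>\<^bsub>?G\<^esub> [a])) = length (\<phi> (p \<otimes>\<^bsub>?G\<^esub> [a])))"
      using \<phi>len[OF p] \<phi>len[OF q] \<phi>cp[OF p q] by simp
    then show ?thesis using adj_char[OF \<phi>c[OF p] \<phi>c[OF q]] by blast
  qed
  have lam_uniq: "b = b'" if "p \<in> ?C" "b \<in> gens I J" "b' \<in> gens I J"
      "\<phi> p \<otimes>\<^bsub>?G\<^esub> [b] = \<phi> p \<otimes>\<^bsub>?G\<^esub> [b']" for p b b'
  proof -
    have "[b] = [b']" using G.l_cancel[OF that(4) sc[OF that(2)] sc[OF that(3)] \<phi>c[OF that(1)]] .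
    then show ?thesis by simp
  qed
  define lam where "lam p a = (SOME b. b \<in> gens I J \<and> \<phi> (p \<otimes>\<^bsub>?G\<^esub> [a]) = \<phi> p \<otimes>\<^bsub>?G\<^esub> [b])" for p a
  have lam: "lam p a \<in> gens I J \<and> \<phi> (p \<otimes>\<^bsub>?G\<^esub> [a]) = \<phi> p \<otimes>\<^bsub>?G\<^esub> [lam p a]"
    if "p \<in> ?C" "a \<in> gens I J" for p a
    unfolding lam_def by (rule someI_ex) (use lam_ex[OF that] in blast)
  have lam_eq: "lam p a = b" if "p \<in> ?C" "a \<in> gens I J" "b \<in> gens I J"
      "\<phi> (p \<otimes>\<^bsub>?G\<^esub> [a]) = \<phi> p \<otimes>\<^bsub>?G\<^esub> [b]" for p a b
    using lam[OF that(1,2)] lam_uniq[OF that(1) _ that(3)] that(4) by metis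
  define F where "F p = H #>\<^bsub>?G\<^esub> (g \<otimes>\<^bsub>?G\<^esub> \<phi> p)" for p
  have Fv: "F p \<in> rcosets\<^bsub>?G\<^esub> H" if "p \<in> ?C" for p
    unfolding F_def by (rule G.rcosetsI[OF Hs G.m_closed[OF g \<phi>c[OF that]]])
  have shift: "\<exists>h0\<in>H. p' = h0 \<otimes>\<^bsub>?G\<^esub> p" if "p \<in> ?C" "p' \<in> ?C"
      "H #>\<^bsub>?G\<^esub> p = H #>\<^bsub>?G\<^esub> p'" for p p'
  proof -
    have "p' \<otimes>\<^bsub>?G\<^esub> inv\<^bsub>?G\<^esub> p \<in> H" using rcos_eq_iff[OF H that(2,1)] that(3) by simp
    moreover have "p' = (p' \<otimes>\<^bsub>?G\<^esub> inv\<^bsub>?G\<^esub> p) \<otimes>\<^bsub>?G\<^esub> p"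
      using that(1,2) by (simp add: G.m_assoc)
    ultimately show ?thesis by blast
  qed
  have F_cong: "F p = F p'" if A: "p \<in> ?C" "p' \<in> ?C" "H #>\<^bsub>?G\<^esub> p = H #>\<^bsub>?G\<^esub> p'" for p p'
  proof -
    obtain h0 where h0: "h0 \<in> H" "p' = h0 \<otimes>\<^bsub>?G\<^esub> p" using shift[OF A] by blast
    have "\<alpha> h0 \<in> (\<lambda>h. inv\<^bsub>?G\<^esub> g \<otimes>\<^bsub>?G\<^esub> h \<otimes>\<^bsub>?G\<^esub> g) ` H" using \<alpha>K h0 by blast
    then obtain h1 where h1: "h1 \<in> H" "\<alpha> h0 = inv\<^bsub>?G\<^esub> g \<otimes>\<^bsub>?G\<^esub> h1 \<otimes>\<^bsub>?G\<^esub> g" by blast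
    have "g \<otimes>\<^bsub>?G\<^esub> \<phi> p' = g \<otimes>\<^bsub>?G\<^esub> (\<alpha> h0 \<otimes>\<^bsub>?G\<^esub> \<phi> p)" using \<phi>eq[OF h0(1) A(1)] h0 by simp
    also have "\<dots> = h1 \<otimes>\<^bsub>?G\<^esub> (g \<otimes>\<^bsub>?G\<^esub> \<phi> p)"
      using h1 g Hc[OF h1(1)] \<phi>c[OF A(1)]
      by (simp add: G.m_assoc[symmetric] G.r_inv)
    finally show ?thesis unfolding F_def
      using rcos_left_H[OF H h1(1) G.m_closed[OF g \<phi>c[OF A(1)]]] by simp
  qed
  have F_inj: "H #>\<^bsub>?G\<^esub> p = H #>\<^bsub>?G\<^esub> p'" if A: "p \<in> ?C" "p' \<in> ?C" "F p = F p'" for p p'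
  proof -
    have gp: "g \<otimes>\<^bsub>?G\<^esub> \<phi> p \<in> ?C" "g \<otimes>\<^bsub>?G\<^esub> \<phi> p' \<in> ?C"
      using g \<phi>c that by auto
    have h: "(g \<otimes>\<^bsub>?G\<^esub> \<phi> p') \<otimes>\<^bsub>?G\<^esub> inv\<^bsub>?G\<^esub> (g \<otimes>\<^bsub>?G\<^esub> \<phi> p) \<in> H"
      using rcos_eq_iff[OF H gp(2,1)] A(3) unfolding F_def by simp
    define h where "h = (g \<otimes>\<^bsub>?G\<^esub> \<phi> p') \<otimes>\<^bsub>?G\<^esub> inv\<^bsub>?G\<^esub> (g \<otimes>\<^bsub>?G\<^esub> \<phi> p)"
    have "\<phi> p' \<otimes>\<^bsub>?G\<^esub> inv\<^bsub>?G\<^esub> (\<phi> p) = inv\<^bsub>?G\<^esub> g \<otimes>\<^bsub>?G\<^esub> h \<otimes>\<^bsub>?G\<^esub> g"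
      unfolding h_def using g \<phi>c[OF A(1)] \<phi>c[OF A(2)]
      by (simp add: G.m_assoc G.inv_mult_group G.inv_cancel_left1)
    then have "\<phi> p' \<otimes>\<^bsub>?G\<^esub> inv\<^bsub>?G\<^esub> (\<phi> p) \<in> \<alpha> ` H" using \<alpha>K h unfolding h_def by auto
    then obtain h0 where h0: "h0 \<in> H" "\<phi> p' \<otimes>\<^bsub>?G\<^esub> inv\<^bsub>?G\<^esub> (\<phi> p) = \<alpha> h0" by auto
    have "\<phi> p' = \<alpha> h0 \<otimes>\<^bsub>?G\<^esub> \<phi> p"
      using h0(2)[symmetric] \<phi>c[OF A(1)] \<phi>c[OF A(2)]
      by (simp add: G.m_assoc G.l_inv)
    also have "\<dots> = \<phi> (h0 \<otimes>\<^bsub>?G\<^esub> p)" using \<phi>eq[OF h0(1) A(1)] by simp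
    finally have "p' = h0 \<otimes>\<^bsub>?G\<^esub> p"
      using \<phi>inj A(2) G.m_closed[OF Hc[OF h0(1)] A(1)] by (simp add: inj_on_def)
    then show ?thesis using rcos_left_H[OF H h0(1) A(1)] by simp
  qed
  have F_surj: "\<exists>p\<in>?C. F p = H #>\<^bsub>?G\<^esub> y" if A: "y \<in> ?C" for y
  proof -
    obtain p where p: "p \<in> ?C" "\<phi> p = inv\<^bsub>?G\<^esub> g \<otimes>\<^bsub>?G\<^esub> y"
      using \<phi>surj[OF G.m_closed[OF G.inv_closed[OF g] A]] by blast
    have "g \<otimes>\<^bsub>?G\<^esub> \<phi> p = y" using p(2) g A
      by (simp add: G.inv_cancel_left2)
    then show ?thesis using p(1) unfolding F_def by blast
  qed
  define rep where "rep C = (SOME p. p \<in> ?C \<and> C = H #>\<^bsub>?G\<^esub> p)" for C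
  have rep: "rep C \<in> ?C \<and> C = H #>\<^bsub>?G\<^esub> rep C" if "C \<in> rcosets\<^bsub>?G\<^esub> H" for C
    unfolding rep_def by (rule someI_ex) (use that in \<open>auto simp: RCOSETS_def\<close>)
  define fv where "fv C = F (rep C)" for C
  define fe where "fe e = (fv (fst e), lam (rep (fst e)) (snd e))" for e
  have fvH: "fv (H #>\<^bsub>?G\<^esub> p) = F p" if "p \<in> ?C" for p
  proof -
    have "H #>\<^bsub>?G\<^esub> p \<in> rcosets\<^bsub>?G\<^esub> H" using G.rcosetsI[OF Hs that] .
    then show ?thesis unfolding fv_def using F_cong[OF _ that] rep by metis
  qed
  have lam_cong: "lam p a = lam p' a" if A: "p \<in> ?C" "p' \<in> ?C" "H #>\<^bsub>?G\<^esub> p = H #>\<^bsub>?G\<^esub> p'"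
      "a \<in> gens I J" for p p' a
  proof -
    obtain h0 where h0: "h0 \<in> H" "p' = h0 \<otimes>\<^bsub>?G\<^esub> p" using shift[OF A(1-3)] by blast
    have l: "lam p a \<in> gens I J" "\<phi> (p \<otimes>\<^bsub>?G\<^esub> [a]) = \<phi> p \<otimes>\<^bsub>?G\<^esub> [lam p a]" using lam[OF A(1,4)] by auto
    have "\<phi> (p' \<otimes>\<^bsub>?G\<^esub> [a]) = \<phi> (h0 \<otimes>\<^bsub>?G\<^esub> (p \<otimes>\<^bsub>?G\<^esub> [a]))"
      using h0 Hc[OF h0(1)] A(1) sc[OF A(4)] by (simp add: G.m_assoc)
    also have "\<dots> = \<alpha> h0 \<otimes>\<^bsub>?G\<^esub> (\<phi> p \<otimes>\<^bsub>?G\<^esub> [lam p a])"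
      using \<phi>eq[OF h0(1) G.m_closed[OF A(1) sc[OF A(4)]]] l(2) by simp
    also have "\<dots> = \<phi> p' \<otimes>\<^bsub>?G\<^esub> [lam p a]"
      using \<phi>eq[OF h0(1) A(1)] h0 \<alpha>c[OF h0(1)] \<phi>c[OF A(1)] sc[OF l(1)]
      by (simp add: G.m_assoc)
    finally show ?thesis using lam_eq[OF A(2,4) l(1)] by simp
  qed
  have feH: "fe (H #>\<^bsub>?G\<^esub> p, a) = (F p, lam p a)" if "p \<in> ?C" "a \<in> gens I J" for p a
  proof -
    have C: "H #>\<^bsub>?G\<^esub> p \<in> rcosets\<^bsub>?G\<^esub> H" using G.rcosetsI[OF Hs that(1)] .
    have "lam (rep (H #>\<^bsub>?G\<^esub> p)) a = lam p a"
      using lam_cong[OF _ that(1) _ that(2)] rep[OF C] by metis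
    then show ?thesis unfolding fe_def using fvH[OF that(1)] by simp
  qed
  have Cform: "\<exists>p\<in>?C. C = H #>\<^bsub>?G\<^esub> p" if "C \<in> rcosets\<^bsub>?G\<^esub> H" for C
    using that by (auto simp: RCOSETS_def)
  have bv: "bij_betw fv (rcosets\<^bsub>?G\<^esub> H) (rcosets\<^bsub>?G\<^esub> H)"
    unfolding bij_betw_def
  proof (intro conjI)
    show "inj_on fv (rcosets\<^bsub>?G\<^esub> H)"
    proof (rule inj_onI)
      fix C C' assume C: "C \<in> rcosets\<^bsub>?G\<^esub> H" and C': "C' \<in> rcosets\<^bsub>?G\<^esub> H" and e: "fv C = fv C'"
      obtain p where p: "p \<in> ?C" "C = H #>\<^bsub>?G\<^esub> p" using Cform[OF C] by blast
      obtain p' where p': "p' \<in> ?C" "C' = H #>\<^bsub>?G\<^esub> p'" using Cform[OF C'] by blast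
      show "C = C'" using F_inj[OF p(1) p'(1)] e fvH p p' by simp
    qed
    show "fv ` (rcosets\<^bsub>?G\<^esub> H) = rcosets\<^bsub>?G\<^esub> H"
    proof
      show "fv ` (rcosets\<^bsub>?G\<^esub> H) \<subseteq> rcosets\<^bsub>?G\<^esub> H" using Cform fvH Fv by force
      show "rcosets\<^bsub>?G\<^esub> H \<subseteq> fv ` (rcosets\<^bsub>?G\<^esub> H)"
      proof
        fix D assume D: "D \<in> rcosets\<^bsub>?G\<^esub> H"
        obtain y where y: "y \<in> ?C" "D = H #>\<^bsub>?G\<^esub> y" using Cform[OF D] by blast
        obtain p where p: "p \<in> ?C" "F p = D" using F_surj[OF y(1)] y by blast
        show "D \<in> fv ` (rcosets\<^bsub>?G\<^esub> H)"
          using fvH[OF p(1)] p G.rcosetsI[OF Hs p(1)] by (metis image_eqI)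
      qed
    qed
  qed
  let ?E = "{(C, a). C \<in> rcosets\<^bsub>?G\<^esub> H \<and> a \<in> gens I J}"
  have be: "bij_betw fe ?E ?E"
    unfolding bij_betw_def
  proof (intro conjI)
    show "inj_on fe ?E"
    proof (rule inj_onI)
      fix e e' assume e: "e \<in> ?E" and e': "e' \<in> ?E" and eq: "fe e = fe e'"
      obtain C a where Ca: "e = (C, a)" "C \<in> rcosets\<^bsub>?G\<^esub> H" "a \<in> gens I J" using e by auto
      obtain C' a' where Ca': "e' = (C', a')" "C' \<in> rcosets\<^bsub>?G\<^esub> H" "a' \<in> gens I J" using e' by auto
      obtain p where p: "p \<in> ?C" "C = H #>\<^bsub>?G\<^esub> p" using Cform[OF Ca(2)] by blast
      obtain p' where p': "p' \<in> ?C" "C' = H #>\<^bsub>?G\<^esub> p'" using Cform[OF Ca'(2)] by blast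
      have e1: "F p = F p'" "lam p a = lam p' a'" using eq Ca Ca' p p' feH by auto
      have CC: "H #>\<^bsub>?G\<^esub> p = H #>\<^bsub>?G\<^esub> p'" using F_inj[OF p(1) p'(1) e1(1)] .
      have "lam p a = lam p a'" using e1(2) lam_cong[OF p(1) p'(1) CC Ca'(3)] by simp
      then have "\<phi> (p \<otimes>\<^bsub>?G\<^esub> [a]) = \<phi> (p \<otimes>\<^bsub>?G\<^esub> [a'])" using lam[OF p(1) Ca(3)] lam[OF p(1) Ca'(3)] by simp
      then have "p \<otimes>\<^bsub>?G\<^esub> [a] = p \<otimes>\<^bsub>?G\<^esub> [a']"
        using \<phi>inj G.m_closed[OF p(1) sc[OF Ca(3)]] G.m_closed[OF p(1) sc[OF Ca'(3)]]
        by (simp add: inj_on_def)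
      then have "[a] = [a']" using G.l_cancel[OF _ sc[OF Ca(3)] sc[OF Ca'(3)] p(1)] by blast
      then show "e = e'" using Ca Ca' p p' CC by simp
    qed
    show "fe ` ?E = ?E"
    proof
      show "fe ` ?E \<subseteq> ?E"
      proof
        fix e assume "e \<in> fe ` ?E"
        then obtain C a where Ca: "e = fe (C, a)" "C \<in> rcosets\<^bsub>?G\<^esub> H" "a \<in> gens I J" by auto
        obtain p where p: "p \<in> ?C" "C = H #>\<^bsub>?G\<^esub> p" using Cform[OF Ca(2)] by blast
        show "e \<in> ?E" using Ca p feH Fv lam by auto
      qed
      show "?E \<subseteq> fe ` ?E"
      proof
        fix e assume "e \<in> ?E"
        then obtain D b where Db: "e = (D, b)" "D \<in> rcosets\<^bsub>?G\<^esub> H" "b \<in> gens I J" by auto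
        obtain y where y: "y \<in> ?C" "D = H #>\<^bsub>?G\<^esub> y" using Cform[OF Db(2)] by blast
        obtain p where p: "p \<in> ?C" "F p = D" using F_surj[OF y(1)] y by blast
        have pb: "\<phi> p \<otimes>\<^bsub>?G\<^esub> [b] \<in> ?C" using G.m_closed[OF \<phi>c[OF p(1)] sc[OF Db(3)]] .
        obtain q where q: "q \<in> ?C" "\<phi> q = \<phi> p \<otimes>\<^bsub>?G\<^esub> [b]" using \<phi>surj[OF pb] by blast
        have "(length (\<phi> q) = length (\<phi> p) + 1 \<and> cp (\<phi> p) (\<phi> q) = length (\<phi> p)) \<or>
              (length (\<phi> p) = length (\<phi> q) + 1 \<and> cp (\<phi> p) (\<phi> q) = length (\<phi> q))"
          using adj_char[OF \<phi>c[OF p(1)] \<phi>c[OF q(1)]] q(2) Db(3) by blast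
        then have "(length q = length p + 1 \<and> cp p q = length p) \<or>
              (length p = length q + 1 \<and> cp p q = length q)"
          using \<phi>len[OF p(1)] \<phi>len[OF q(1)] \<phi>cp[OF p(1) q(1)] by simp
        then obtain a where a: "a \<in> gens I J" "q = p \<otimes>\<^bsub>?G\<^esub> [a]" using adj_char[OF p(1) q(1)] by blast
        have "lam p a = b" using lam_eq[OF p(1) a(1) Db(3)] q(2) a(2) by simp
        then have "fe (H #>\<^bsub>?G\<^esub> p, a) = e" using feH[OF p(1) a(1)] p Db by simp
        moreover have "(H #>\<^bsub>?G\<^esub> p, a) \<in> ?E" using G.rcosetsI[OF Hs p(1)] a by simp
        ultimately show "e \<in> fe ` ?E" by (metis image_eqI)
      qed
    qed
  qed
  have compat: "fst (fe e) = fv (fst e) \<and> einv (schreier I J H) (fe e) = fe (einv (schreier I J H) e)"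
    if A: "e \<in> ?E" for e
  proof -
    obtain C a where Ca: "e = (C, a)" "C \<in> rcosets\<^bsub>?G\<^esub> H" "a \<in> gens I J" using A by auto
    obtain p where p: "p \<in> ?C" "C = H #>\<^bsub>?G\<^esub> p" using Cform[OF Ca(2)] by blast
    have l: "lam p a \<in> gens I J" "\<phi> (p \<otimes>\<^bsub>?G\<^esub> [a]) = \<phi> p \<otimes>\<^bsub>?G\<^esub> [lam p a]" using lam[OF p(1) Ca(3)] by auto
    have pa: "p \<otimes>\<^bsub>?G\<^esub> [a] \<in> ?C" using G.m_closed[OF p(1) sc[OF Ca(3)]] .
    have C1: "C #>\<^bsub>?G\<^esub> [a] = H #>\<^bsub>?G\<^esub> (p \<otimes>\<^bsub>?G\<^esub> [a])"
      using p G.coset_mult_assoc[OF Hs p(1) sc[OF Ca(3)]] by simp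
    have F1: "F p #>\<^bsub>?G\<^esub> [lam p a] = F (p \<otimes>\<^bsub>?G\<^esub> [a])"
      unfolding F_def
      using G.coset_mult_assoc[OF Hs G.m_closed[OF g \<phi>c[OF p(1)]] sc[OF l(1)]] l(2)
        G.m_assoc[OF g \<phi>c[OF p(1)] sc[OF l(1)]] by (simp)
    have aa: "[a] \<otimes>\<^bsub>?G\<^esub> [ginv a] = []" using reduce_cancel_pair[of "[]" a "[]"] by (simp add: FP_mult)
    have "\<phi> ((p \<otimes>\<^bsub>?G\<^esub> [a]) \<otimes>\<^bsub>?G\<^esub> [ginv a]) = \<phi> p"
      using G.m_assoc[OF p(1) sc[OF Ca(3)] sc[of "ginv a"]] Ca(3) aa p(1)
      by (simp add: G.r_one[OF p(1), unfolded FP_one])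
    moreover have "\<phi> (p \<otimes>\<^bsub>?G\<^esub> [a]) \<otimes>\<^bsub>?G\<^esub> [ginv (lam p a)] = \<phi> p"
    proof -
      have bb: "[lam p a] \<otimes>\<^bsub>?G\<^esub> [ginv (lam p a)] = []" using reduce_cancel_pair[of "[]" "lam p a" "[]"] by (simp add: FP_mult)
      show ?thesis using l(2) G.m_assoc[OF \<phi>c[OF p(1)] sc[OF l(1)] sc[of "ginv (lam p a)"]] l(1) bb
        by (simp add: G.r_one[OF \<phi>c[OF p(1)], unfolded FP_one])
    qed
    ultimately have L2: "lam (p \<otimes>\<^bsub>?G\<^esub> [a]) (ginv a) = ginv (lam p a)"
      using lam_eq[OF pa _ _] Ca(3) l(1) by simp
    show ?thesis
      using Ca p feH[OF p(1) Ca(3)] feH[OF pa, of "ginv a"] Ca(3) C1 F1 L2 fvH[OF p(1)]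
      by (simp add: schreier_simps)
  qed
  have "graph_aut (schreier I J H) fv fe"
    unfolding graph_aut_def using bv be compat by (simp add: schreier_simps)
  moreover have "fv H = H #>\<^bsub>?G\<^esub> g"
  proof -
    have "H = H #>\<^bsub>?G\<^esub> []" using G.coset_mult_one[OF Hs] by (simp add: FP_one)
    then have "fv H = F []" using fvH[of "[]"] by (simp add: FP_carrier)
    then show ?thesis unfolding F_def using \<phi>0 g G.r_one[OF g] by (simp add: FP_one)
  qed
  ultimately show ?thesis by blast
qed


definition conjs :: "'i set \<Rightarrow> 'j set \<Rightarrow> ('i,'j) gen list \<Rightarrow> ('i,'j) gen list set \<Rightarrow> ('i,'j) gen list set" where
  "conjs I J g H = (\<lambda>h. inv\<^bsub>FP I J\<^esub> g \<otimes>\<^bsub>FP I J\<^esub> h \<otimes>\<^bsub>FP I J\<^esub> g) ` H"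

lemma conjs_subgroup:
  assumes H: "subgroup H (FP I J)" and g: "g \<in> carrier (FP I J)"
  shows "subgroup (conjs I J g H) (FP I J)"
proof -
  interpret G: group "FP I J" by (rule FP_group)
  have Hc: "\<And>h. h \<in> H \<Longrightarrow> h \<in> carrier (FP I J)" by (rule subgroup.mem_carrier[OF H])
  show ?thesis
  proof (rule G.subgroupI)
    show "conjs I J g H \<subseteq> carrier (FP I J)" using Hc g by (auto simp: conjs_def)
    show "conjs I J g H \<noteq> {}" using subgroup.one_closed[OF H] by (auto simp: conjs_def)
  next
    fix a assume "a \<in> conjs I J g H"
    then obtain h where h: "h \<in> H" "a = inv\<^bsub>FP I J\<^esub> g \<otimes>\<^bsub>FP I J\<^esub> h \<otimes>\<^bsub>FP I J\<^esub> g" by (auto simp: conjs_def)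
    have "inv\<^bsub>FP I J\<^esub> a = inv\<^bsub>FP I J\<^esub> g \<otimes>\<^bsub>FP I J\<^esub> inv\<^bsub>FP I J\<^esub> h \<otimes>\<^bsub>FP I J\<^esub> g"
      using h g Hc[OF h(1)] by (simp add: G.inv_mult_group G.m_assoc)
    then show "inv\<^bsub>FP I J\<^esub> a \<in> conjs I J g H"
      using subgroup.m_inv_closed[OF H h(1)] by (auto simp: conjs_def)
  next
    fix a b assume "a \<in> conjs I J g H" "b \<in> conjs I J g H"
    then obtain h h' where h: "h \<in> H" "a = inv\<^bsub>FP I J\<^esub> g \<otimes>\<^bsub>FP I J\<^esub> h \<otimes>\<^bsub>FP I J\<^esub> g"
      and h': "h' \<in> H" "b = inv\<^bsub>FP I J\<^esub> g \<otimes>\<^bsub>FP I J\<^esub> h' \<otimes>\<^bsub>FP I J\<^esub> g" by (auto simp: conjs_def)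
    have "a \<otimes>\<^bsub>FP I J\<^esub> b = inv\<^bsub>FP I J\<^esub> g \<otimes>\<^bsub>FP I J\<^esub> (h \<otimes>\<^bsub>FP I J\<^esub> h') \<otimes>\<^bsub>FP I J\<^esub> g"
      using h h' g Hc[OF h(1)] Hc[OF h'(1)] by (simp add: G.m_assoc G.inv_cancel_left2)
    then show "a \<otimes>\<^bsub>FP I J\<^esub> b \<in> conjs I J g H"
      using subgroup.m_closed[OF H h(1) h'(1)] by (auto simp: conjs_def)
  qed
qed

lemma conjs_one:
  assumes H: "subgroup H (FP I J)" shows "conjs I J [] H = H"
proof -
  interpret G: group "FP I J" by (rule FP_group)
  have "inv\<^bsub>FP I J\<^esub> [] \<otimes>\<^bsub>FP I J\<^esub> h \<otimes>\<^bsub>FP I J\<^esub> [] = h" if "h \<in> H" for h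
    using G.inv_one G.l_one G.r_one subgroup.mem_carrier[OF H that] by (simp add: FP_one)
  then show ?thesis unfolding conjs_def by (simp cong: image_cong)
qed

lemma conjs_comp:
  assumes H: "subgroup H (FP I J)" and g: "g \<in> carrier (FP I J)" and g': "g' \<in> carrier (FP I J)"
  shows "conjs I J g' (conjs I J g H) = conjs I J (g \<otimes>\<^bsub>FP I J\<^esub> g') H"
proof -
  interpret G: group "FP I J" by (rule FP_group)
  have "inv\<^bsub>FP I J\<^esub> g' \<otimes>\<^bsub>FP I J\<^esub> (inv\<^bsub>FP I J\<^esub> g \<otimes>\<^bsub>FP I J\<^esub> h \<otimes>\<^bsub>FP I J\<^esub> g) \<otimes>\<^bsub>FP I J\<^esub> g'
      = inv\<^bsub>FP I J\<^esub> (g \<otimes>\<^bsub>FP I J\<^esub> g') \<otimes>\<^bsub>FP I J\<^esub> h \<otimes>\<^bsub>FP I J\<^esub> (g \<otimes>\<^bsub>FP I J\<^esub> g')"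
    if "h \<in> H" for h
    using g g' subgroup.mem_carrier[OF H that] by (simp add: G.inv_mult_group G.m_assoc)
  then show ?thesis unfolding conjs_def image_image by (simp cong: image_cong)
qed

lemma alpha_props:
  assumes H: "subgroup H (FP I J)" and g: "g \<in> carrier (FP I J)"
    and iso: "\<alpha> \<in> iso ((FP I J)\<lparr>carrier := H\<rparr>) ((FP I J)\<lparr>carrier := conjs I J g H\<rparr>)"
    and wl: "\<forall>h\<in>H. word_length I J (\<alpha> h) = word_length I J h"
  shows "bij_betw \<alpha> H (conjs I J g H)"
    and "\<And>x. x \<in> H \<Longrightarrow> \<alpha> x \<in> carrier (FP I J)"
    and "\<And>x y. x \<in> H \<Longrightarrow> y \<in> H \<Longrightarrow> \<alpha> (x \<otimes>\<^bsub>FP I J\<^esub> y) = \<alpha> x \<otimes>\<^bsub>FP I J\<^esub> \<alpha> y"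
    and "\<alpha> [] = []"
    and "\<And>h. h \<in> H \<Longrightarrow> \<alpha> (winv h) = winv (\<alpha> h)"
    and "\<And>h. h \<in> H \<Longrightarrow> length (\<alpha> h) = length h"
    and "\<And>h h'. h \<in> H \<Longrightarrow> h' \<in> H \<Longrightarrow> cp (\<alpha> h) (\<alpha> h') = cp h h'"
proof -
  interpret G: group "FP I J" by (rule FP_group)
  have Hc: "\<And>h. h \<in> H \<Longrightarrow> h \<in> carrier (FP I J)" by (rule subgroup.mem_carrier[OF H])
  have Kc: "\<And>h. h \<in> conjs I J g H \<Longrightarrow> h \<in> carrier (FP I J)"
    by (rule subgroup.mem_carrier[OF conjs_subgroup[OF H g]])
  show bij: "bij_betw \<alpha> H (conjs I J g H)" using iso by (simp add: iso_def)
  have hom: "\<alpha> (x \<otimes>\<^bsub>FP I J\<^esub> y) = \<alpha> x \<otimes>\<^bsub>FP I J\<^esub> \<alpha> y" if "x \<in> H" "y \<in> H" for x y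
    using iso that unfolding iso_def hom_def by auto
  show "\<alpha> (x \<otimes>\<^bsub>FP I J\<^esub> y) = \<alpha> x \<otimes>\<^bsub>FP I J\<^esub> \<alpha> y" if "x \<in> H" "y \<in> H" for x y
    using hom that .
  have ac: "\<alpha> x \<in> carrier (FP I J)" if "x \<in> H" for x
    using bij that Kc by (auto simp: bij_betw_def)
  show "\<alpha> x \<in> carrier (FP I J)" if "x \<in> H" for x using ac that .
  have one: "[] \<in> H" using subgroup.one_closed[OF H] by (simp add: FP_one)
  have "\<alpha> [] = \<alpha> [] \<otimes>\<^bsub>FP I J\<^esub> \<alpha> []" using hom[OF one one] by (simp add: FP_mult)
  then have a0: "\<alpha> [] = []" using G.l_cancel_one[OF ac[OF one] ac[OF one]] by (simp add: FP_one)
  show "\<alpha> [] = []" by (rule a0)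
  have ainv: "\<alpha> (winv h) = winv (\<alpha> h)" if h: "h \<in> H" for h
  proof -
    have wh: "winv h \<in> H" using subgroup.m_inv_closed[OF H h] FP_inv[OF Hc[OF h]] by simp
    have "\<alpha> (winv h) \<otimes>\<^bsub>FP I J\<^esub> \<alpha> h = \<alpha> []"
      using hom[OF wh h] reduce_cancel_winv[of "[]" h "[]"] by (simp add: FP_mult)
    then have "inv\<^bsub>FP I J\<^esub> (\<alpha> h) = \<alpha> (winv h)"
      using G.inv_equality[OF _ ac[OF h] ac[OF wh]] a0 by (simp add: FP_one)
    then show ?thesis using FP_inv[OF ac[OF h]] by simp
  qed
  show "\<alpha> (winv h) = winv (\<alpha> h)" if "h \<in> H" for h using ainv that .
  have len: "length (\<alpha> h) = length h" if h: "h \<in> H" for h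
    using wl h word_length_eq[OF ac[OF h]] word_length_eq[OF Hc[OF h]] by simp
  show "length (\<alpha> h) = length h" if "h \<in> H" for h using len that .
  show "cp (\<alpha> h) (\<alpha> h') = cp h h'" if h: "h \<in> H" "h' \<in> H" for h h'
  proof -
    have wh: "winv h \<in> H" using subgroup.m_inv_closed[OF H h(1)] FP_inv[OF Hc[OF h(1)]] by simp
    have m: "winv h \<otimes>\<^bsub>FP I J\<^esub> h' \<in> H" using subgroup.m_closed[OF H wh h(2)] .
    have r: "reduced h" "reduced h'" "reduced (\<alpha> h)" "reduced (\<alpha> h')"
      using Hc[OF h(1)] Hc[OF h(2)] ac[OF h(1)] ac[OF h(2)] by (auto simp: FP_carrier)
    have L1: "length (reduce (winv h @ h')) = length h + length h' - 2 * cp h h'"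
      using prod_length[OF reduced_winv[OF r(1)] r(2)] by simp
    have "\<alpha> (winv h \<otimes>\<^bsub>FP I J\<^esub> h') = reduce (winv (\<alpha> h) @ \<alpha> h')"
      using hom[OF wh h(2)] ainv[OF h(1)] by (simp add: FP_mult)
    then have L2: "length (\<alpha> (winv h \<otimes>\<^bsub>FP I J\<^esub> h')) = length h + length h' - 2 * cp (\<alpha> h) (\<alpha> h')"
      using prod_length[OF reduced_winv[OF r(3)] r(4)] len[OF h(1)] len[OF h(2)] by simp
    have "cp h h' \<le> length h" "cp h h' \<le> length h'" "cp (\<alpha> h) (\<alpha> h') \<le> length h" "cp (\<alpha> h) (\<alpha> h') \<le> length h'"
      using cp_le[of h h'] cp_le[of "\<alpha> h" "\<alpha> h'"] len[OF h(1)] len[OF h(2)] by auto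
    then show ?thesis using L1 L2 len[OF m] by (simp add: FP_mult)
  qed
qed


lemma cp_refl: "cp x x = length x"
  using cp_self_append[of x "[]"] by simp

lemma aut_from_alpha:
  assumes H: "subgroup H (FP I J)" and g: "g \<in> carrier (FP I J)"
    and iso: "\<alpha> \<in> iso ((FP I J)\<lparr>carrier := H\<rparr>) ((FP I J)\<lparr>carrier := conjs I J g H\<rparr>)"
    and wl: "\<forall>h\<in>H. word_length I J (\<alpha> h) = word_length I J h"
    and PH: "Pref H = carrier (FP I J)" and PK: "Pref (conjs I J g H) = carrier (FP I J)"
  shows "\<exists>fv fe. graph_aut (schreier I J H) fv fe \<and> fv H = H #>\<^bsub>FP I J\<^esub> g"
proof -
  interpret G: group "FP I J" by (rule FP_group)
  let ?C = "carrier (FP I J)"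
  let ?K = "conjs I J g H"
  note A = alpha_props[OF H g iso wl]
  have Hc: "\<And>h. h \<in> H \<Longrightarrow> h \<in> ?C" by (rule subgroup.mem_carrier[OF H])
  define \<phi> where "\<phi> p = take (length p) (\<alpha> (SOME h. h \<in> H \<and> length p \<le> length h \<and> take (length p) h = p))" for p
  have \<phi>take: "\<phi> (take k h) = take k (\<alpha> h)" if h: "h \<in> H" "k \<le> length h" for h k
  proof -
    let ?p = "take k h"
    have lp: "length ?p = k" using h by simp
    have "\<exists>h'. h' \<in> H \<and> length ?p \<le> length h' \<and> take (length ?p) h' = ?p"
      using h lp by (intro exI[of _ h]) simp
    then have s: "(SOME h'. h' \<in> H \<and> length ?p \<le> length h' \<and> take (length ?p) h' = ?p) \<in> H \<and>
        length ?p \<le> length (SOME h'. h' \<in> H \<and> length ?p \<le> length h' \<and> take (length ?p) h' = ?p) \<and>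
        take (length ?p) (SOME h'. h' \<in> H \<and> length ?p \<le> length h' \<and> take (length ?p) h' = ?p) = ?p"
      by (rule someI_ex)
    define h0 where "h0 = (SOME h'. h' \<in> H \<and> length ?p \<le> length h' \<and> take (length ?p) h' = ?p)"
    have h0: "h0 \<in> H" "k \<le> length h0" "take k h0 = take k h" using s lp unfolding h0_def by auto
    have "k \<le> cp h0 h" using take_eq_iff_cp[of k h0 h] h0 h by simp
    then have "k \<le> cp (\<alpha> h0) (\<alpha> h)" using A(7)[OF h0(1) h(1)] by simp
    moreover have "k \<le> length (\<alpha> h0)" "k \<le> length (\<alpha> h)" using A(6) h0 h by auto
    ultimately have "take k (\<alpha> h0) = take k (\<alpha> h)" using take_eq_iff_cp by blast
    then show ?thesis unfolding \<phi>_def h0_def[symmetric] using lp by simp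
  qed
  have PrefE: "\<exists>h k. h \<in> H \<and> k \<le> length h \<and> p = take k h" if "p \<in> ?C" for p
    using Pref_E[of p H] that PH by blast
  have \<phi>c: "\<phi> p \<in> ?C" if "p \<in> ?C" for p
    using PrefE[OF that] \<phi>take FP_carrier_take[OF A(2)] by auto
  have \<phi>len: "length (\<phi> p) = length p" if "p \<in> ?C" for p
    using PrefE[OF that] \<phi>take A(6) by auto
  have \<phi>cp: "cp (\<phi> p) (\<phi> p') = cp p p'" if P: "p \<in> ?C" "p' \<in> ?C" for p p'
  proof -
    obtain h k where hk: "h \<in> H" "k \<le> length h" "p = take k h" using PrefE[OF P(1)] by blast
    obtain h' k' where hk': "h' \<in> H" "k' \<le> length h'" "p' = take k' h'" using PrefE[OF P(2)] by blast
    show ?thesis using hk hk' \<phi>take A(7) by (simp add: cp_take2)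
  qed
  have \<phi>inj: "inj_on \<phi> ?C"
  proof (rule inj_onI)
    fix p p' assume p: "p \<in> ?C" and p': "p' \<in> ?C" and e: "\<phi> p = \<phi> p'"
    have l: "length p = length p'" using \<phi>len[OF p] \<phi>len[OF p'] e by simp
    have "cp p p' = cp (\<phi> p') (\<phi> p')" using \<phi>cp[OF p p'] e by simp
    also have "\<dots> = length p" using cp_refl[of "\<phi> p'"] \<phi>len[OF p'] l by simp
    finally have "cp p p' = length p" .
    then show "p = p'" using cp_take_eq[of p p'] l by simp
  qed
  have \<phi>surj: "\<exists>p\<in>?C. \<phi> p = y" if Y: "y \<in> ?C" for y
  proof -
    obtain x k where xk: "x \<in> ?K" "k \<le> length x" "y = take k x"
      using Pref_E[of y ?K] Y PK by blast
    have "x \<in> \<alpha> ` H" using A(1) xk(1) by (simp add: bij_betw_def)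
    then obtain h where h: "h \<in> H" "\<alpha> h = x" by (metis imageE)
    have "take k h \<in> ?C" using PH Pref_I[OF h(1)] by auto
    moreover have "\<phi> (take k h) = y" using \<phi>take[OF h(1)] xk h A(6)[OF h(1)] by simp
    ultimately show ?thesis by blast
  qed
  have \<phi>0: "\<phi> [] = []" by (simp add: \<phi>_def)
  have \<phi>eq: "\<phi> (h \<otimes>\<^bsub>FP I J\<^esub> p) = \<alpha> h \<otimes>\<^bsub>FP I J\<^esub> \<phi> p" if h: "h \<in> H" and p: "p \<in> ?C" for h p
  proof -
    obtain h' j where hj: "h' \<in> H" "j \<le> length h'" "p = take j h'" using PrefE[OF p] by blast
    have wh: "winv h \<in> H" using subgroup.m_inv_closed[OF H h] FP_inv[OF Hc[OF h]] by simp
    define c where "c = cp (winv h) h'"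
    have c': "cp (winv (\<alpha> h)) (\<alpha> h') = c" using A(5)[OF h] A(7)[OF wh hj(1)] c_def by simp
    have r: "reduced h" "reduced h'" "reduced (\<alpha> h)" "reduced (\<alpha> h')"
      using Hc[OF h] Hc[OF hj(1)] A(2)[OF h] A(2)[OF hj(1)] by (auto simp: FP_carrier)
    have cle: "c \<le> length h" "c \<le> length h'" using cp_le[of "winv h" h'] c_def by auto
    have hh: "h \<otimes>\<^bsub>FP I J\<^esub> h' \<in> H" using subgroup.m_closed[OF H h hj(1)] .
    have len_hh: "length (h \<otimes>\<^bsub>FP I J\<^esub> h') = length h + length h' - 2 * c"
      using prod_length[OF r(1,2)] c_def by (simp add: FP_mult)
    have L: "h \<otimes>\<^bsub>FP I J\<^esub> p = (if j \<le> c then take (length h - j) h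
                                 else take (length h - c + (j - c)) (h \<otimes>\<^bsub>FP I J\<^esub> h'))"
      using prod_take[OF r(1,2) hj(2) c_def] hj(3) by (simp add: FP_mult)
    have R: "\<alpha> h \<otimes>\<^bsub>FP I J\<^esub> \<phi> p = (if j \<le> c then take (length h - j) (\<alpha> h)
                                 else take (length h - c + (j - c)) (\<alpha> h \<otimes>\<^bsub>FP I J\<^esub> \<alpha> h'))"
    proof -
      have "\<phi> p = take j (\<alpha> h')" using \<phi>take[OF hj(1,2)] hj(3) by simp
      moreover have "j \<le> length (\<alpha> h')" using hj(2) A(6)[OF hj(1)] by simp
      ultimately show ?thesis
        using prod_take[OF r(3,4) _ c'[symmetric]] A(6)[OF h] by (simp add: FP_mult)
    qed
    show ?thesis
    proof (cases "j \<le> c")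
      case True then show ?thesis using L R \<phi>take[OF h] by simp
    next
      case False
      have "length h - c + (j - c) \<le> length (h \<otimes>\<^bsub>FP I J\<^esub> h')" using len_hh False cle hj(2) by simp
      then show ?thesis using L R False \<phi>take[OF hh] A(3)[OF h hj(1)] by simp
    qed
  qed
  have \<alpha>K: "\<alpha> ` H = (\<lambda>h. inv\<^bsub>FP I J\<^esub> g \<otimes>\<^bsub>FP I J\<^esub> h \<otimes>\<^bsub>FP I J\<^esub> g) ` H"
    using A(1) by (simp add: bij_betw_def conjs_def)
  show ?thesis
    by (rule main_construction[OF H g \<phi>c \<phi>inj \<phi>surj \<phi>len \<phi>cp \<phi>0 \<phi>eq \<alpha>K])
qed


lemma graph_aut_id: "graph_aut \<Gamma> id id"
  by (simp add: graph_aut_def)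

lemma reverse_dir:
  assumes H: "subgroup H (FP I J)" and LT: "length_transitive I J H"
  shows "vertex_transitive (schreier I J H)"
proof -
  interpret G: group "FP I J" by (rule FP_group)
  let ?C = "carrier (FP I J)"
  have Hs: "H \<subseteq> ?C" by (rule subgroup.subset[OF H])
  have one: "[] \<in> H" using subgroup.one_closed[OF H] by (simp add: FP_one)
  have LT': "\<exists>\<alpha>. \<alpha> \<in> iso ((FP I J)\<lparr>carrier := H\<rparr>) ((FP I J)\<lparr>carrier := conjs I J g H\<rparr>)
        \<and> (\<forall>h\<in>H. word_length I J (\<alpha> h) = word_length I J h)" if "g \<in> ?C" for g
    using LT that unfolding length_transitive_def conjs_def by blast
  show ?thesis
  proof (cases "H = {[]}")
    case True
    show ?thesis
    proof (rule vt_from_base[OF H])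
      fix x assume x: "x \<in> ?C"
      have "inv\<^bsub>FP I J\<^esub> x \<otimes>\<^bsub>FP I J\<^esub> [] \<otimes>\<^bsub>FP I J\<^esub> x = []"
        using x G.r_one[OF G.inv_closed[OF x]] G.l_inv[OF x] by (simp add: FP_one del: FP_mult)
      then have K: "id ` H = (\<lambda>h. inv\<^bsub>FP I J\<^esub> x \<otimes>\<^bsub>FP I J\<^esub> h \<otimes>\<^bsub>FP I J\<^esub> x) ` H"
        using True by simp
      show "\<exists>fv fe. graph_aut (schreier I J H) fv fe \<and> fv H = H #>\<^bsub>FP I J\<^esub> x"
        by (rule main_construction[OF H x _ _ _ _ _ _ _ K]) auto
    qed
  next
    case Hne: False
    obtain h0 where h0: "h0 \<in> H" "h0 \<noteq> []" using Hne one by blast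
    show ?thesis
    proof (cases "\<forall>a\<in>gens I J. \<exists>c\<in>gens I J. c \<noteq> ginv a")
      case two: True
      have PK: "Pref (conjs I J g H) = ?C" if g: "g \<in> ?C" for g
      proof (rule ccontr)
        let ?K = "conjs I J g H"
        have Ksub: "subgroup ?K (FP I J)" by (rule conjs_subgroup[OF H g])
        assume "Pref ?K \<noteq> ?C"
        then obtain w where w: "w \<in> ?C" "w \<notin> Pref ?K" using Pref_carrier[OF Ksub] by blast
        obtain g' where g': "g' \<in> ?C" and far: "\<forall>k\<in>?K. k \<noteq> [] \<longrightarrow>
            length h0 < length (inv\<^bsub>FP I J\<^esub> g' \<otimes>\<^bsub>FP I J\<^esub> k \<otimes>\<^bsub>FP I J\<^esub> g')"
          using far_conjugate[OF Ksub w two] by blast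
        have gg: "g \<otimes>\<^bsub>FP I J\<^esub> g' \<in> ?C" using G.m_closed[OF g g'] .
        obtain \<alpha> where iso: "\<alpha> \<in> iso ((FP I J)\<lparr>carrier := H\<rparr>) ((FP I J)\<lparr>carrier := conjs I J (g \<otimes>\<^bsub>FP I J\<^esub> g') H\<rparr>)"
          and wl: "\<forall>h\<in>H. word_length I J (\<alpha> h) = word_length I J h" using LT'[OF gg] by blast
        note A = alpha_props[OF H gg iso wl]
        have "\<alpha> h0 \<in> conjs I J g' ?K" using A(1) h0(1) conjs_comp[OF H g g'] by (auto simp: bij_betw_def)
        then obtain k where k: "k \<in> ?K" "\<alpha> h0 = inv\<^bsub>FP I J\<^esub> g' \<otimes>\<^bsub>FP I J\<^esub> k \<otimes>\<^bsub>FP I J\<^esub> g'"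
          unfolding conjs_def[of I J g' ?K] by blast
        have kne: "k \<noteq> []"
        proof
          assume "k = []"
          then have "\<alpha> h0 = []" using k(2) G.r_one[OF G.inv_closed[OF g']] G.l_inv[OF g']
            by (simp add: FP_one del: FP_mult)
          then have "\<alpha> h0 = \<alpha> []" using A(4) by simp
          then show False using A(1) h0 one by (auto simp: bij_betw_def inj_on_def)
        qed
        have "length h0 < length (\<alpha> h0)" using far k kne by simp
        then show False using A(6)[OF h0(1)] by simp
      qed
      show ?thesis
      proof (rule vt_from_base[OF H])
        fix x assume x: "x \<in> ?C"
        obtain \<alpha> where iso: "\<alpha> \<in> iso ((FP I J)\<lparr>carrier := H\<rparr>) ((FP I J)\<lparr>carrier := conjs I J x H\<rparr>)"
          and wl: "\<forall>h\<in>H. word_length I J (\<alpha> h) = word_length I J h" using LT'[OF x] by blast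
        have PH: "Pref H = ?C" using PK[of "[]"] conjs_one[OF H] by (simp add: FP_carrier)
        show "\<exists>fv fe. graph_aut (schreier I J H) fv fe \<and> fv H = H #>\<^bsub>FP I J\<^esub> x"
          by (rule aut_from_alpha[OF H x iso wl PH PK[OF x]])
      qed
    next
      case False
      then obtain a where a: "a \<in> gens I J" and all: "\<forall>c\<in>gens I J. c = ginv a" by blast
      have aa: "ginv a = a" using all a by simp
      have small: "x = [] \<or> x = [a]" if x: "x \<in> ?C" for x
      proof -
        have s: "set x \<subseteq> gens I J" "reduced x" using x by (auto simp: FP_carrier)
        have xa: "\<forall>i<length x. x ! i = a" using s(1) all aa by (auto simp: subset_iff)
        have "length x < 2"
        proof (rule ccontr)
          assume "\<not> length x < 2"
          then have "x ! Suc 0 \<noteq> ginv (x ! 0)" using s(2) reduced_nth[of x] by simp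
          moreover have "x ! Suc 0 = a" using xa[rule_format, of "Suc 0"] \<open>\<not> length x < 2\<close> by simp
          moreover have "x ! 0 = a" using xa[rule_format, of 0] \<open>\<not> length x < 2\<close> by (cases x) auto
          ultimately show False using aa by simp
        qed
        then show ?thesis
        proof (cases x)
          case (Cons b rest)
          then have "rest = []" using \<open>length x < 2\<close> by simp
          moreover have "b = a" using xa Cons by auto
          ultimately show ?thesis using Cons by simp
        qed simp
      qed
      have "H = ?C"
      proof
        show "H \<subseteq> ?C" by (rule Hs)
        have "h0 = [a]" using small[OF subsetD[OF Hs h0(1)]] h0(2) by blast
        then show "?C \<subseteq> H" using small one h0(1) by blast
      qed
      then have V: "\<forall>C\<in>rcosets\<^bsub>FP I J\<^esub> H. C = H"
        using subgroup.rcos_const[OF H G.is_group] by (auto simp: RCOSETS_def)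
      show ?thesis unfolding vertex_transitive_def
      proof (intro ballI)
        fix u v assume "u \<in> verts (schreier I J H)" "v \<in> verts (schreier I J H)"
        then have "u = H" "v = H" using V by (simp_all add: schreier_simps)
        then have "u = v" by simp
        then show "\<exists>fv fe. graph_aut (schreier I J H) fv fe \<and> fv u = v"
          using graph_aut_id[of "schreier I J H"] by force
      qed
    qed
  qed
qed


fun PhiW :: "('c \<Rightarrow> 'a \<Rightarrow> 'c) \<Rightarrow> ('c \<Rightarrow> 'a \<Rightarrow> 'b) \<Rightarrow> 'c \<Rightarrow> 'a list \<Rightarrow> 'b list" where
  "PhiW nx lab C [] = []"
| "PhiW nx lab C (a # w) = lab C a # PhiW nx lab (nx C a) w"

fun endv :: "('c \<Rightarrow> 'a \<Rightarrow> 'c) \<Rightarrow> 'c \<Rightarrow> 'a list \<Rightarrow> 'c" where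
  "endv nx C [] = C"
| "endv nx C (a # w) = endv nx (nx C a) w"

lemma PhiW_length[simp]: "length (PhiW nx lab C w) = length w"
  by (induction w arbitrary: C) auto

lemma PhiW_append: "PhiW nx lab C (u @ v) = PhiW nx lab C u @ PhiW nx lab (endv nx C u) v"
  by (induction u arbitrary: C) auto

lemma endv_append: "endv nx C (u @ v) = endv nx (endv nx C u) v"
  by (induction u arbitrary: C) auto

definition nxS :: "'i set \<Rightarrow> 'j set \<Rightarrow> ('i,'j) gen list set \<Rightarrow> ('i,'j) gen \<Rightarrow> ('i,'j) gen list set" where
  "nxS I J C a = C #>\<^bsub>FP I J\<^esub> [a]"

lemma endv_coset:
  assumes H: "subgroup H (FP I J)" and C: "C \<in> rcosets\<^bsub>FP I J\<^esub> H" and w: "set w \<subseteq> gens I J"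
  shows "endv (nxS I J) C w = C #>\<^bsub>FP I J\<^esub> reduce w"
  using C w
proof (induction w arbitrary: C)
  case Nil
  interpret G: group "FP I J" by (rule FP_group)
  have "C \<subseteq> carrier (FP I J)" using subgroup.rcosets_carrier[OF H G.is_group Nil(1)] .
  then show ?case using G.coset_mult_one by (simp add: FP_one)
next
  case (Cons a w)
  interpret G: group "FP I J" by (rule FP_group)
  have a: "a \<in> gens I J" using Cons by simp
  have C': "nxS I J C a \<in> rcosets\<^bsub>FP I J\<^esub> H" using rcosets_step[OF H Cons(2) a] by (simp add: nxS_def)
  have Cc: "C \<subseteq> carrier (FP I J)" using subgroup.rcosets_carrier[OF H G.is_group Cons(2)] .
  have "endv (nxS I J) C (a # w) = nxS I J C a #>\<^bsub>FP I J\<^esub> reduce w" using Cons C' by simp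
  also have "\<dots> = C #>\<^bsub>FP I J\<^esub> ([a] \<otimes>\<^bsub>FP I J\<^esub> reduce w)"
    unfolding nxS_def
    by (rule G.coset_mult_assoc[OF Cc singleton_carrier[OF a] reduce_carrier]) (use Cons in simp)
  also have "\<dots> = C #>\<^bsub>FP I J\<^esub> reduce (a # w)"
    using reduce_append_right[of "[a]" w] by (simp add: FP_mult)
  finally show ?case .
qed

lemma path_facts:
  assumes H: "subgroup H (FP I J)" and A: "graph_aut (schreier I J H) fv fe"
  defines "lab \<equiv> (\<lambda>C a. snd (fe (C, a)))"
  shows "\<And>C a. C \<in> rcosets\<^bsub>FP I J\<^esub> H \<Longrightarrow> a \<in> gens I J \<Longrightarrow> fe (C, a) = (fv C, lab C a) \<and> lab C a \<in> gens I J"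
    and "\<And>C a. C \<in> rcosets\<^bsub>FP I J\<^esub> H \<Longrightarrow> a \<in> gens I J \<Longrightarrow> fv (nxS I J C a) = nxS I J (fv C) (lab C a)"
    and "\<And>C w. C \<in> rcosets\<^bsub>FP I J\<^esub> H \<Longrightarrow> set w \<subseteq> gens I J \<Longrightarrow> set (PhiW (nxS I J) lab C w) \<subseteq> gens I J"
    and "\<And>C w. C \<in> rcosets\<^bsub>FP I J\<^esub> H \<Longrightarrow> set w \<subseteq> gens I J \<Longrightarrow>
           fv (endv (nxS I J) C w) = endv (nxS I J) (fv C) (PhiW (nxS I J) lab C w)"
    and "\<And>C w. C \<in> rcosets\<^bsub>FP I J\<^esub> H \<Longrightarrow> set w \<subseteq> gens I J \<Longrightarrow>
           PhiW (nxS I J) lab C (reduce w) = reduce (PhiW (nxS I J) lab C w)"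
    and "\<And>C w w'. C \<in> rcosets\<^bsub>FP I J\<^esub> H \<Longrightarrow> set w \<subseteq> gens I J \<Longrightarrow> set w' \<subseteq> gens I J \<Longrightarrow>
           PhiW (nxS I J) lab C w = PhiW (nxS I J) lab C w' \<Longrightarrow> w = w'"
proof -
  interpret G: group "FP I J" by (rule FP_group)
  let ?V = "rcosets\<^bsub>FP I J\<^esub> H"
  let ?nx = "nxS I J"
  have be: "bij_betw fe (edges (schreier I J H)) (edges (schreier I J H))"
    and c: "\<forall>e \<in> edges (schreier I J H). init (schreier I J H) (fe e) = fv (init (schreier I J H) e)
              \<and> einv (schreier I J H) (fe e) = fe (einv (schreier I J H) e)"
    using A by (auto simp: graph_aut_def)
  have nxV: "?nx C a \<in> ?V" if "C \<in> ?V" "a \<in> gens I J" for C a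
    using rcosets_step[OF H that] by (simp add: nxS_def)
  have F0: "fe (C, a) = (fv C, lab C a) \<and> lab C a \<in> gens I J" if C: "C \<in> ?V" and a: "a \<in> gens I J" for C a
  proof -
    have e: "(C, a) \<in> edges (schreier I J H)" using C a by (simp add: schreier_simps)
    then have "fe (C, a) \<in> edges (schreier I J H)" using be by (auto simp: bij_betw_def)
    moreover have "fst (fe (C, a)) = fv C" using c e by (simp add: schreier_simps)
    ultimately show ?thesis unfolding lab_def by (cases "fe (C, a)") (auto simp: schreier_simps)
  qed
  show "\<And>C a. C \<in> ?V \<Longrightarrow> a \<in> gens I J \<Longrightarrow> fe (C, a) = (fv C, lab C a) \<and> lab C a \<in> gens I J"
    by (rule F0)
  have F12: "fv (?nx C a) = ?nx (fv C) (lab C a) \<and> lab (?nx C a) (ginv a) = ginv (lab C a)"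
    if C: "C \<in> ?V" and a: "a \<in> gens I J" for C a
  proof -
    have e: "(C, a) \<in> edges (schreier I J H)" using C a by (simp add: schreier_simps)
    have "einv (schreier I J H) (fe (C, a)) = fe (einv (schreier I J H) (C, a))" using c e by blast
    then have "(?nx (fv C) (lab C a), ginv (lab C a)) = fe (?nx C a, ginv a)"
      using F0[OF C a] by (simp add: schreier_simps nxS_def)
    also have "\<dots> = (fv (?nx C a), lab (?nx C a) (ginv a))" using F0[OF nxV[OF C a]] a by simp
    finally show ?thesis by simp
  qed
  show F1: "\<And>C a. C \<in> ?V \<Longrightarrow> a \<in> gens I J \<Longrightarrow> fv (?nx C a) = ?nx (fv C) (lab C a)"
    using F12 by blast
  have F3: "lab C a \<noteq> lab C a'" if C: "C \<in> ?V" and a: "a \<in> gens I J" "a' \<in> gens I J" "a \<noteq> a'" for C a a'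
  proof
    assume "lab C a = lab C a'"
    then have "fe (C, a) = fe (C, a')" using F0[OF C a(1)] F0[OF C a(2)] by simp
    moreover have "(C, a) \<in> edges (schreier I J H)" "(C, a') \<in> edges (schreier I J H)"
      using C a by (auto simp: schreier_simps)
    ultimately show False using be a(3) by (auto simp: bij_betw_def inj_on_def)
  qed
  have P1: "?nx (?nx C a) (ginv a) = C" if C: "C \<in> ?V" and a: "a \<in> gens I J" for C a
  proof -
    have Cc: "C \<subseteq> carrier (FP I J)" using subgroup.rcosets_carrier[OF H G.is_group C] .
    have "?nx (?nx C a) (ginv a) = C #>\<^bsub>FP I J\<^esub> ([a] \<otimes>\<^bsub>FP I J\<^esub> [ginv a])"
      unfolding nxS_def using G.coset_mult_assoc[OF Cc singleton_carrier[OF a] singleton_carrier] a by simp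
    also have "[a] \<otimes>\<^bsub>FP I J\<^esub> [ginv a] = \<one>\<^bsub>FP I J\<^esub>" using reduce_cancel_pair[of "[]" a "[]"] by (simp add: FP_mult FP_one)
    finally show ?thesis using G.coset_mult_one[OF Cc] by simp
  qed
  show gensP: "\<And>C w. C \<in> ?V \<Longrightarrow> set w \<subseteq> gens I J \<Longrightarrow> set (PhiW ?nx lab C w) \<subseteq> gens I J"
  proof -
    fix C w show "C \<in> ?V \<Longrightarrow> set w \<subseteq> gens I J \<Longrightarrow> set (PhiW ?nx lab C w) \<subseteq> gens I J"
      by (induction w arbitrary: C) (auto simp: F0 nxV)
  qed
  show "\<And>C w. C \<in> ?V \<Longrightarrow> set w \<subseteq> gens I J \<Longrightarrow> fv (endv ?nx C w) = endv ?nx (fv C) (PhiW ?nx lab C w)"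
  proof -
    fix C w show "C \<in> ?V \<Longrightarrow> set w \<subseteq> gens I J \<Longrightarrow> fv (endv ?nx C w) = endv ?nx (fv C) (PhiW ?nx lab C w)"
      by (induction w arbitrary: C) (auto simp: F1 nxV)
  qed
  have stepP: "PhiW ?nx lab C (step a r) = step (lab C a) (PhiW ?nx lab (?nx C a) r)"
    if C: "C \<in> ?V" and a: "a \<in> gens I J" and r: "set r \<subseteq> gens I J" for C a r
  proof (cases r)
    case Nil then show ?thesis by (simp add: step_def)
  next
    case (Cons c r')
    have c: "c \<in> gens I J" using r Cons by simp
    show ?thesis
    proof (cases "c = ginv a")
      case True
      then show ?thesis using Cons F12[OF C a] P1[OF C a] by (simp add: step_def)
    next
      case False
      have "lab (?nx C a) c \<noteq> lab (?nx C a) (ginv a)"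
        using F3[OF nxV[OF C a] c _ False] a by simp
      then have "lab (?nx C a) c \<noteq> ginv (lab C a)" using F12[OF C a] by simp
      then show ?thesis using Cons False by (simp add: step_def)
    qed
  qed
  show "\<And>C w. C \<in> ?V \<Longrightarrow> set w \<subseteq> gens I J \<Longrightarrow> PhiW ?nx lab C (reduce w) = reduce (PhiW ?nx lab C w)"
  proof -
    fix C w show "C \<in> ?V \<Longrightarrow> set w \<subseteq> gens I J \<Longrightarrow> PhiW ?nx lab C (reduce w) = reduce (PhiW ?nx lab C w)"
    proof (induction w arbitrary: C)
      case Nil then show ?case by simp
    next
      case (Cons a w)
      have a: "a \<in> gens I J" and w: "set w \<subseteq> gens I J" using Cons by auto
      have "PhiW ?nx lab C (reduce (a # w)) = step (lab C a) (PhiW ?nx lab (?nx C a) (reduce w))"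
        using stepP[OF Cons(2) a] set_reduce[of w] w by (simp add: reduce_Cons)
      also have "\<dots> = step (lab C a) (reduce (PhiW ?nx lab (?nx C a) w))"
        using Cons.IH[OF nxV[OF Cons(2) a] w] by simp
      finally show ?case by (simp add: reduce_Cons)
    qed
  qed
  show "\<And>C w w'. C \<in> ?V \<Longrightarrow> set w \<subseteq> gens I J \<Longrightarrow> set w' \<subseteq> gens I J \<Longrightarrow>
           PhiW ?nx lab C w = PhiW ?nx lab C w' \<Longrightarrow> w = w'"
  proof -
    fix C w w' show "C \<in> ?V \<Longrightarrow> set w \<subseteq> gens I J \<Longrightarrow> set w' \<subseteq> gens I J \<Longrightarrow>
           PhiW ?nx lab C w = PhiW ?nx lab C w' \<Longrightarrow> w = w'"
    proof (induction w arbitrary: C w')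
      case Nil then show ?case by (cases w') auto
    next
      case (Cons a w)
      then obtain a' w'' where w': "w' = a' # w''" by (cases w') auto
      have "a = a'" using Cons.prems w' F3[OF Cons.prems(1), of a a'] by auto
      then show ?case using Cons.IH[OF nxV[OF Cons.prems(1)], of a w''] Cons.prems w' by auto
    qed
  qed
qed


lemma forward_dir:
  assumes H: "subgroup H (FP I J)" and VT: "vertex_transitive (schreier I J H)"
  shows "length_transitive I J H"
  unfolding length_transitive_def
proof (intro ballI)
  interpret G: group "FP I J" by (rule FP_group)
  let ?C = "carrier (FP I J)"
  let ?V = "rcosets\<^bsub>FP I J\<^esub> H"
  let ?E = "edges (schreier I J H)"
  let ?nx = "nxS I J"
  fix g assume g: "g \<in> ?C"
  let ?K = "(\<lambda>h. inv\<^bsub>FP I J\<^esub> g \<otimes>\<^bsub>FP I J\<^esub> h \<otimes>\<^bsub>FP I J\<^esub> g) ` H"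
  have Hs: "H \<subseteq> ?C" by (rule subgroup.subset[OF H])
  have Hc: "\<And>h. h \<in> H \<Longrightarrow> h \<in> ?C" by (rule subgroup.mem_carrier[OF H])
  have HV: "H \<in> ?V" by (rule H_in_rcosets[OF H])
  have HgV: "H #>\<^bsub>FP I J\<^esub> g \<in> ?V" by (rule G.rcosetsI[OF Hs g])
  obtain fv fe where A: "graph_aut (schreier I J H) fv fe" and fvH: "fv H = H #>\<^bsub>FP I J\<^esub> g"
  proof -
    have "\<exists>fv fe. graph_aut (schreier I J H) fv fe \<and> fv H = H #>\<^bsub>FP I J\<^esub> g"
      using VT HV HgV unfolding vertex_transitive_def schreier_simps by blast
    then show ?thesis using that by blast
  qed
  define lab where "lab = (\<lambda>C a. snd (fe (C, a)))"
  note P = path_facts[OF H A, folded lab_def]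
  define fv' where "fv' = inv_into (verts (schreier I J H)) fv"
  define fe' where "fe' = inv_into ?E fe"
  have A': "graph_aut (schreier I J H) fv' fe'"
    unfolding fv'_def fe'_def by (rule graph_aut_inv[OF A schreier_wf[OF H]])
  define lab' where "lab' = (\<lambda>C a. snd (fe' (C, a)))"
  note P' = path_facts[OF H A', folded lab'_def]
  have bv: "bij_betw fv ?V ?V" and be: "bij_betw fe ?E ?E"
    using A by (auto simp: graph_aut_def schreier_simps)
  have fv'V: "fv' D \<in> ?V" if "D \<in> ?V" for D
    using that bv unfolding fv'_def bij_betw_def by (auto simp: schreier_simps intro: inv_into_into)
  have fv'fv: "fv' (fv D) = D" if "D \<in> ?V" for D
    using that bv unfolding fv'_def bij_betw_def by (simp add: schreier_simps inv_into_f_f)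
  have fefe': "fe (fe' e) = e" if "e \<in> ?E" for e
    using that be unfolding fe'_def bij_betw_def by (simp add: f_inv_into_f)
  define \<alpha> where "\<alpha> = PhiW ?nx lab H"
  have hfacts: "set h \<subseteq> gens I J \<and> reduce h = h \<and> endv ?nx H h = H" if h: "h \<in> H" for h
  proof -
    have hc: "h \<in> ?C" using Hc[OF h] .
    have r: "set h \<subseteq> gens I J" "reduce h = h" using hc by (auto simp: FP_carrier reduce_reduced)
    have "endv ?nx H h = H #>\<^bsub>FP I J\<^esub> h" using endv_coset[OF H HV r(1)] r(2) by simp
    also have "\<dots> = H" using subgroup.rcos_const[OF H G.is_group h] .
    finally show ?thesis using r by simp
  qed
  have \<alpha>c: "\<alpha> h \<in> ?C" if h: "h \<in> H" for h
  proof -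
    note hf = hfacts[OF h]
    have "\<alpha> h = reduce (\<alpha> h)" using P(5)[OF HV, of h] hf unfolding \<alpha>_def by simp
    then have "reduced (\<alpha> h)" by (metis reduced_reduce)
    then show ?thesis using P(3)[OF HV, of h] hf unfolding \<alpha>_def by (simp add: FP_carrier)
  qed
  have \<alpha>K: "\<alpha> h \<in> ?K" if h: "h \<in> H" for h
  proof -
    note hf = hfacts[OF h]
    have ac: "\<alpha> h \<in> ?C" using \<alpha>c[OF h] .
    have "fv H = endv ?nx (H #>\<^bsub>FP I J\<^esub> g) (\<alpha> h)"
      using P(4)[OF HV, of h] hf fvH unfolding \<alpha>_def by simp
    also have "\<dots> = (H #>\<^bsub>FP I J\<^esub> g) #>\<^bsub>FP I J\<^esub> \<alpha> h"
      using endv_coset[OF H HgV, of "\<alpha> h"] ac by (simp add: FP_carrier reduce_reduced)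
    also have "\<dots> = H #>\<^bsub>FP I J\<^esub> (g \<otimes>\<^bsub>FP I J\<^esub> \<alpha> h)" by (rule G.coset_mult_assoc[OF Hs g ac])
    finally have "H #>\<^bsub>FP I J\<^esub> (g \<otimes>\<^bsub>FP I J\<^esub> \<alpha> h) = H #>\<^bsub>FP I J\<^esub> g" using fvH by simp
    then have h1: "(g \<otimes>\<^bsub>FP I J\<^esub> \<alpha> h) \<otimes>\<^bsub>FP I J\<^esub> inv\<^bsub>FP I J\<^esub> g \<in> H"
      using rcos_eq_iff[OF H G.m_closed[OF g ac] g] by simp
    have "\<alpha> h = inv\<^bsub>FP I J\<^esub> g \<otimes>\<^bsub>FP I J\<^esub> ((g \<otimes>\<^bsub>FP I J\<^esub> \<alpha> h) \<otimes>\<^bsub>FP I J\<^esub> inv\<^bsub>FP I J\<^esub> g) \<otimes>\<^bsub>FP I J\<^esub> g"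
      using g ac by (simp add: G.m_assoc G.inv_cancel_left1)
    then show ?thesis using h1 by blast
  qed
  have \<alpha>hom: "\<alpha> (x \<otimes>\<^bsub>FP I J\<^esub> y) = \<alpha> x \<otimes>\<^bsub>FP I J\<^esub> \<alpha> y" if x: "x \<in> H" and y: "y \<in> H" for x y
  proof -
    note hx = hfacts[OF x] and hy = hfacts[OF y]
    have "\<alpha> (x \<otimes>\<^bsub>FP I J\<^esub> y) = PhiW ?nx lab H (reduce (x @ y))" unfolding \<alpha>_def by (simp add: FP_mult)
    also have "\<dots> = reduce (PhiW ?nx lab H (x @ y))" using P(5)[OF HV, of "x @ y"] hx hy by simp
    also have "\<dots> = reduce (\<alpha> x @ \<alpha> y)" unfolding \<alpha>_def PhiW_append using hx by simp
    finally show ?thesis by (simp add: FP_mult)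
  qed
  have \<alpha>inj: "inj_on \<alpha> H"
  proof (rule inj_onI)
    fix x y assume "x \<in> H" "y \<in> H" "\<alpha> x = \<alpha> y"
    then show "x = y" using P(6)[OF HV] hfacts unfolding \<alpha>_def by blast
  qed
  have inv_rel: "PhiW ?nx lab (fv' D) (PhiW ?nx lab' D k) = k"
    if "D \<in> ?V" "set k \<subseteq> gens I J" for D k
    using that
  proof (induction k arbitrary: D)
    case Nil then show ?case by simp
  next
    case (Cons b k)
    have b: "b \<in> gens I J" and k: "set k \<subseteq> gens I J" using Cons by auto
    have e': "fe' (D, b) = (fv' D, lab' D b)" "lab' D b \<in> gens I J" using P'(1)[OF Cons(2) b] by (auto simp: lab'_def)
    have "(D, b) \<in> ?E" using Cons(2) b by (simp add: schreier_simps)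
    then have "fe (fv' D, lab' D b) = (D, b)" using fefe' e' by metis
    then have l: "lab (fv' D) (lab' D b) = b"
      using P(1)[OF fv'V[OF Cons(2)] e'(2)] by (simp add: lab_def)
    have n: "?nx (fv' D) (lab' D b) = fv' (?nx D b)" using P'(2)[OF Cons(2) b] by (simp add: lab'_def)
    have nV: "?nx D b \<in> ?V" using rcosets_step[OF H Cons(2) b] by (simp add: nxS_def)
    show ?case using l n Cons.IH[OF nV k] by simp
  qed
  have \<alpha>surj: "?K \<subseteq> \<alpha> ` H"
  proof
    fix k assume "k \<in> ?K"
    then obtain h1 where h1: "h1 \<in> H" "k = inv\<^bsub>FP I J\<^esub> g \<otimes>\<^bsub>FP I J\<^esub> h1 \<otimes>\<^bsub>FP I J\<^esub> g" by blast
    have kc: "k \<in> ?C" using h1 g Hc[OF h1(1)] by simp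
    have ks: "set k \<subseteq> gens I J" "reduce k = k" using kc by (auto simp: FP_carrier reduce_reduced)
    have fv'Hg: "fv' (H #>\<^bsub>FP I J\<^esub> g) = H" using fv'fv[OF HV] fvH by simp
    define w where "w = PhiW ?nx lab' (H #>\<^bsub>FP I J\<^esub> g) k"
    have ws: "set w \<subseteq> gens I J" using P'(3)[OF HgV ks(1)] unfolding w_def .
    have wr: "reduce w = w" using P'(5)[OF HgV ks(1)] ks(2) unfolding w_def by simp
    have gk: "g \<otimes>\<^bsub>FP I J\<^esub> k = h1 \<otimes>\<^bsub>FP I J\<^esub> g"
      using h1 g Hc[OF h1(1)] by (simp add: G.m_assoc G.inv_cancel_left2)
    have "endv ?nx (H #>\<^bsub>FP I J\<^esub> g) k = (H #>\<^bsub>FP I J\<^esub> g) #>\<^bsub>FP I J\<^esub> k"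
      using endv_coset[OF H HgV ks(1)] ks(2) by simp
    also have "\<dots> = H #>\<^bsub>FP I J\<^esub> (h1 \<otimes>\<^bsub>FP I J\<^esub> g)" using G.coset_mult_assoc[OF Hs g kc] gk by simp
    also have "\<dots> = H #>\<^bsub>FP I J\<^esub> g" by (rule rcos_left_H[OF H h1(1) g])
    finally have "fv' (endv ?nx (H #>\<^bsub>FP I J\<^esub> g) k) = H" using fv'Hg by simp
    then have "endv ?nx H w = H" using P'(4)[OF HgV ks(1)] fv'Hg unfolding w_def by simp
    then have "H #>\<^bsub>FP I J\<^esub> w = H" using endv_coset[OF H HV ws] wr by simp
    moreover have wc: "w \<in> ?C" using ws wr reduced_reduce[of w] by (simp add: FP_carrier)
    ultimately have wH: "w \<in> H" using G.coset_join1[OF _ wc H] by blast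
    have "\<alpha> w = k" unfolding \<alpha>_def w_def using inv_rel[OF HgV ks(1)] fv'Hg by simp
    then show "k \<in> \<alpha> ` H" using wH by blast
  qed
  have bij: "bij_betw \<alpha> H ?K" unfolding bij_betw_def using \<alpha>inj \<alpha>K \<alpha>surj by blast
  have iso: "\<alpha> \<in> iso ((FP I J)\<lparr>carrier := H\<rparr>) ((FP I J)\<lparr>carrier := ?K\<rparr>)"
    unfolding iso_def hom_def using bij \<alpha>K \<alpha>hom by auto
  have wl: "\<forall>h\<in>H. word_length I J (\<alpha> h) = word_length I J h"
  proof
    fix h assume h: "h \<in> H"
    show "word_length I J (\<alpha> h) = word_length I J h"
      using word_length_eq[OF \<alpha>c[OF h]] word_length_eq[OF Hc[OF h]] unfolding \<alpha>_def by simp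
  qed
  show "\<exists>\<alpha>. \<alpha> \<in> iso ((FP I J)\<lparr>carrier := H\<rparr>) ((FP I J)\<lparr>carrier := ?K\<rparr>) \<and>
          (\<forall>h\<in>H. word_length I J (\<alpha> h) = word_length I J h)"
    using iso wl by blast
qed

theorem corollary4p12:
  fixes I :: "'i set" and J :: "'j set" and H :: "('i,'j) gen list set"
  assumes "subgroup H (FP I J)"
  shows "vertex_transitive (schreier I J H) \<longleftrightarrow> length_transitive I J H"
  using forward_dir[OF assms] reverse_dir[OF assms] by blast


end
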